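(* In the setting of the context, there exists $\alpha_0>0$ such that for all $\alpha\in(0,\alpha_0)$ the matrices $I-\mathcal{H}_{11}$ and $I-\mathcal{H}_{22}$ are invertible, and the quantities $$q^\infty=(I-\mathcal{H}_{11})^{-1}u_q^\infty,\quad \hat{\mathbf Q}^\infty=(I-\mathcal{H}_{22})^{-1}(\mathcal{H}_{21}q^\infty+u_Q^\infty),\quad \delta^\infty=C_\delta\hat{\mathbf Q}^\infty$$ satisfy $q^\infty=O(\alpha)$, $\hat{\mathbf Q}^\infty=O(\alpha)$ and $\delta^\infty=O(\alpha)$ as $\alpha\to0^+$.
   Context: Setting. $\mathcal{S}$ is a finite set; $\{s^k\}_{k\ge0}$ is a Markov chain on $\mathcal{S}$ that is irreducible and aperiodic. A feature map $\phi:\mathcal{S}\to\mathbb{R}^p$ is given, with linearly independent feature vectors. $\gamma\in(0,1)$. There are $M$ agents with rewards $R_m:\mathcal{S}\times\mathcal{S}\to\mathbb{R}$. $W\in\mathbb{R}^{M\times M}$ is doubly stochastic with entries in $[0,1]$ whose off-diagonal sparsity pattern is that of a connected undirected graph. (These quantities describe decentralized TD(0) with learning rate $\alpha$: $\theta_m^{k+1}=\sum_{m'}W_{mm'}\theta_{m'}^k+\alpha\phi(s^k)[(\gamma\phi(s^{k+1})-\phi(s^k))^\top\theta_m^k+R_m(s^k,s^{k+1})]$.) Let $n=|\mathcal{S}|^2$, identify pairs $(s,s')$ with $\mathcal{N}=\{1,\dots,n\}$, and let $z^k$ be the index of $(s^k,s^{k+1})$; $\{z^k\}$ is a Markov chain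 with transition probabilities $p_{ij}=\mathbb{P}(z^{k+1}=j\mid z^k=i)$ and limiting distribution $p^\infty$. For $i\leftrightarrow(s,s')$: $A_i=\phi(s)(\gamma\phi(s')-\phi(s))^\top$, $b_{m,i}=R_m(s,s')\phi(s)$, $B_i=[b_{1,i}\cdots b_{M,i}]\in\mathbb{R}^{p\times M}$. $\bar A=\sum_ip_i^\infty A_i$ (which is Hurwitz), $\bar{\mathbf b}=\frac1M\sum_m\sum_ip_i^\infty b_{m,i}$, $\theta^*$ the unique solution of $\bar A\theta^*+\bar{\mathbf b}=0$, $\Theta^*=[\theta^*\cdots\theta^*]\in\mathbb{R}^{p\times M}$. $n_\xi=Mp$, $H_i=\alpha I_M\otimes A_i+W\otimes I_p$, $G_i=\alpha\,\mathrm{vec}(B_i+A_i\Theta^* )\in\mathbb{R}^{n_\xi}$ (vec stacks columns). $\mathcal{H}_{11}$, $\mathcal{H}_{22}$, $\mathcal{H}_{21}$ are $n\times n$ block matrices with $(j,i)$ blocks $p_{ij}H_i$, $p_{ij}H_i\otimes H_i$, $p_{ij}(H_i\otimes G_i+G_i\otimes H_i)$ respectively. $u_q^\infty\in\mathbb{R}^{nn_\xi}$ has $j$-th block $\sum_ip_{ij}p_i^\infty G_i$ and $u_Q^\infty\in\mathbb{R}^{nn_\xi^2}$ has $j$-th block $\sum_ip_{ij}p_i^\infty G_i\otimes G_i$. $C_\delta=\frac1M(\mathbf 1_n^\top\otimes\mathrm{vec}(I_{n_\xi})^\top)$. *)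

theory Defs
  imports "HOL-Analysis.Analysis" "HOL-Library.Landau_Symbols"
begin

(* Index conventions:  states 's, features 'p, agents 'm (all finite types).
   A pair index i = (s,s') : 's \<times> 's  (so n = |S|^2).
   The stacked parameter index is 'm \<times> 'p : (m,a) is the a-th entry of the m-th column
   (column-major vec, so n_xi = M p). *)

primrec mpow :: "real^('n::finite)^'n \<Rightarrow> nat \<Rightarrow> real^'n^'n" where
  "mpow A 0 = mat 1"
| "mpow A (Suc k) = A ** mpow A k"

definition stochastic_matrix :: "real^('n::finite)^'n \<Rightarrow> bool" where
  "stochastic_matrix P \<longleftrightarrow> (\<forall>i j. 0 \<le> P $ i $ j) \<and> (\<forall>i. (\<Sum>j\<in>UNIV. P $ i $ j) = 1)"

definition irreducible_chain :: "real^('n::finite)^'n \<Rightarrow> bool" where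
  "irreducible_chain P \<longleftrightarrow> (\<forall>i j. \<exists>k. mpow P k $ i $ j > 0)"

definition aperiodic_chain :: "real^('n::finite)^'n \<Rightarrow> bool" where
  "aperiodic_chain P \<longleftrightarrow> (\<forall>i. Gcd {k::nat. 0 < k \<and> mpow P k $ i $ i > 0} = 1)"

definition doubly_stochastic :: "real^('n::finite)^'n \<Rightarrow> bool" where
  "doubly_stochastic W \<longleftrightarrow> (\<forall>i j. 0 \<le> W $ i $ j) \<and> (\<forall>i. (\<Sum>j\<in>UNIV. W $ i $ j) = 1)
      \<and> (\<forall>j. (\<Sum>i\<in>UNIV. W $ i $ j) = 1)"

definition pattern_edges :: "real^('n::finite)^'n \<Rightarrow> ('n \<times> 'n) set" where
  "pattern_edges W = {(i,j). i \<noteq> j \<and> W $ i $ j \<noteq> 0}"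

definition connected_undirected_pattern :: "real^('n::finite)^'n \<Rightarrow> bool" where
  "connected_undirected_pattern W \<longleftrightarrow> sym (pattern_edges W) \<and> (\<forall>i j. (i,j) \<in> (pattern_edges W)\<^sup>*)"

(* the feature vectors (columns of the |S| x p feature matrix) are linearly independent *)
definition lin_indep_features :: "(('s::finite) \<Rightarrow> real^('p::finite)) \<Rightarrow> bool" where
  "lin_indep_features phi \<longleftrightarrow> (\<forall>c::real^'p. (\<forall>s. (\<Sum>k\<in>UNIV. c $ k * phi s $ k) = 0) \<longrightarrow> c = 0)"

(* transition matrix of the pair chain z^k = (s^k, s^{k+1}) : p_ij *)
definition pairP :: "real^('s::finite)^'s \<Rightarrow> real^('s\<times>'s)^('s\<times>'s)" where
  "pairP P = (\<chi> i j. if snd i = fst j then P $ fst j $ snd j else 0)"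

definition limiting_distribution :: "real^('n::finite)^'n \<Rightarrow> real^'n \<Rightarrow> bool" where
  "limiting_distribution Q pinf \<longleftrightarrow> (\<forall>i j. (\<lambda>k. mpow Q k $ i $ j) \<longlonglongrightarrow> pinf $ j)"

definition Amat :: "(('s::finite) \<Rightarrow> real^('p::finite)) \<Rightarrow> real \<Rightarrow> 's \<times> 's \<Rightarrow> real^'p^'p" where
  "Amat phi \<gamma> i = (\<chi> a b. phi (fst i) $ a * (\<gamma> * phi (snd i) $ b - phi (fst i) $ b))"

definition bvec :: "(('m::finite) \<Rightarrow> ('s::finite) \<Rightarrow> 's \<Rightarrow> real) \<Rightarrow> ('s \<Rightarrow> real^('p::finite)) \<Rightarrow> 'm \<Rightarrow> 's \<times> 's \<Rightarrow> real^'p" where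
  "bvec R phi m i = R m (fst i) (snd i) *\<^sub>R phi (fst i)"

definition Bmat :: "(('m::finite) \<Rightarrow> ('s::finite) \<Rightarrow> 's \<Rightarrow> real) \<Rightarrow> ('s \<Rightarrow> real^('p::finite)) \<Rightarrow> 's \<times> 's \<Rightarrow> real^'m^'p" where
  "Bmat R phi i = (\<chi> a m. bvec R phi m i $ a)"

definition Abar :: "(('s::finite) \<Rightarrow> real^('p::finite)) \<Rightarrow> real \<Rightarrow> real^('s\<times>'s) \<Rightarrow> real^'p^'p" where
  "Abar phi \<gamma> pinf = (\<Sum>i\<in>UNIV. pinf $ i *\<^sub>R Amat phi \<gamma> i)"

definition bbar :: "(('m::finite) \<Rightarrow> ('s::finite) \<Rightarrow> 's \<Rightarrow> real) \<Rightarrow> ('s \<Rightarrow> real^('p::finite)) \<Rightarrow> real^('s\<times>'s) \<Rightarrow> real^'p" where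
  "bbar R phi pinf = (1 / real CARD('m)) *\<^sub>R (\<Sum>m\<in>UNIV. \<Sum>i\<in>UNIV. pinf $ i *\<^sub>R bvec R phi m i)"

definition Theta :: "real^('p::finite) \<Rightarrow> real^('m::finite)^'p" where
  "Theta \<theta> = (\<chi> a m. \<theta> $ a)"

definition vecm :: "real^('m::finite)^('p::finite) \<Rightarrow> real^('m\<times>'p)" where
  "vecm X = (\<chi> x. X $ snd x $ fst x)"

definition kron :: "real^('b::finite)^('a::finite) \<Rightarrow> real^('d::finite)^('c::finite) \<Rightarrow> real^('b\<times>'d)^('a\<times>'c)" where
  "kron A B = (\<chi> r c. A $ fst r $ fst c * B $ snd r $ snd c)"

definition Hmat :: "(('s::finite) \<Rightarrow> real^('p::finite)) \<Rightarrow> real \<Rightarrow> real^('m::finite)^'m \<Rightarrow> real \<Rightarrow> 's \<times> 's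
                      \<Rightarrow> real^('m\<times>'p)^('m\<times>'p)" where
  "Hmat phi \<gamma> W \<alpha> i = \<alpha> *\<^sub>R kron (mat 1 :: real^'m^'m) (Amat phi \<gamma> i) + kron W (mat 1 :: real^'p^'p)"

definition Gvec :: "(('m::finite) \<Rightarrow> ('s::finite) \<Rightarrow> 's \<Rightarrow> real) \<Rightarrow> ('s \<Rightarrow> real^('p::finite)) \<Rightarrow> real \<Rightarrow> real^'p \<Rightarrow> real \<Rightarrow> 's \<times> 's
                      \<Rightarrow> real^('m\<times>'p)" where
  "Gvec R phi \<gamma> \<theta> \<alpha> i = \<alpha> *\<^sub>R vecm (Bmat R phi i + Amat phi \<gamma> i ** Theta \<theta>)"

(* (j,i) block of H11 is p_ij H_i *)
definition H11 :: "real^('s::finite)^'s \<Rightarrow> ('s \<Rightarrow> real^('p::finite)) \<Rightarrow> real \<Rightarrow> real^('m::finite)^'m \<Rightarrow> real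
       \<Rightarrow> real^(('s\<times>'s)\<times>('m\<times>'p))^(('s\<times>'s)\<times>('m\<times>'p))" where
  "H11 P phi \<gamma> W \<alpha> = (\<chi> r c. pairP P $ fst c $ fst r * Hmat phi \<gamma> W \<alpha> (fst c) $ snd r $ snd c)"

(* (j,i) block of H22 is p_ij (H_i \<otimes> H_i) *)
definition H22 :: "real^('s::finite)^'s \<Rightarrow> ('s \<Rightarrow> real^('p::finite)) \<Rightarrow> real \<Rightarrow> real^('m::finite)^'m \<Rightarrow> real
       \<Rightarrow> real^(('s\<times>'s)\<times>(('m\<times>'p)\<times>('m\<times>'p)))^(('s\<times>'s)\<times>(('m\<times>'p)\<times>('m\<times>'p)))" where
  "H22 P phi \<gamma> W \<alpha> = (\<chi> r c. pairP P $ fst c $ fst r *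
      kron (Hmat phi \<gamma> W \<alpha> (fst c)) (Hmat phi \<gamma> W \<alpha> (fst c)) $ snd r $ snd c)"

(* (j,i) block of H21 is p_ij (H_i \<otimes> G_i + G_i \<otimes> H_i), G_i viewed as an n_xi x 1 column *)
definition H21 :: "real^('s::finite)^'s \<Rightarrow> ('s \<Rightarrow> real^('p::finite)) \<Rightarrow> real \<Rightarrow> real^('m::finite)^'m \<Rightarrow> ('m \<Rightarrow> 's \<Rightarrow> 's \<Rightarrow> real)
       \<Rightarrow> real^'p \<Rightarrow> real
       \<Rightarrow> real^(('s\<times>'s)\<times>('m\<times>'p))^(('s\<times>'s)\<times>(('m\<times>'p)\<times>('m\<times>'p)))" where
  "H21 P phi \<gamma> W R \<theta> \<alpha> = (\<chi> r c. pairP P $ fst c $ fst r *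
      (Hmat phi \<gamma> W \<alpha> (fst c) $ fst (snd r) $ snd c * Gvec R phi \<gamma> \<theta> \<alpha> (fst c) $ snd (snd r)
       + Gvec R phi \<gamma> \<theta> \<alpha> (fst c) $ fst (snd r) * Hmat phi \<gamma> W \<alpha> (fst c) $ snd (snd r) $ snd c))"

definition uq :: "real^('s::finite)^'s \<Rightarrow> real^('s\<times>'s) \<Rightarrow> ('s \<Rightarrow> real^('p::finite)) \<Rightarrow> real \<Rightarrow> (('m::finite) \<Rightarrow> 's \<Rightarrow> 's \<Rightarrow> real)
       \<Rightarrow> real^'p \<Rightarrow> real \<Rightarrow> real^(('s\<times>'s)\<times>('m\<times>'p))" where
  "uq P pinf phi \<gamma> R \<theta> \<alpha> = (\<chi> r. \<Sum>i\<in>UNIV. pairP P $ i $ fst r * pinf $ i * Gvec R phi \<gamma> \<theta> \<alpha> i $ snd r)"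

definition uQ :: "real^('s::finite)^'s \<Rightarrow> real^('s\<times>'s) \<Rightarrow> ('s \<Rightarrow> real^('p::finite)) \<Rightarrow> real \<Rightarrow> (('m::finite) \<Rightarrow> 's \<Rightarrow> 's \<Rightarrow> real)
       \<Rightarrow> real^'p \<Rightarrow> real \<Rightarrow> real^(('s\<times>'s)\<times>(('m\<times>'p)\<times>('m\<times>'p)))" where
  "uQ P pinf phi \<gamma> R \<theta> \<alpha> = (\<chi> r. \<Sum>i\<in>UNIV. pairP P $ i $ fst r * pinf $ i *
      (Gvec R phi \<gamma> \<theta> \<alpha> i $ fst (snd r) * Gvec R phi \<gamma> \<theta> \<alpha> i $ snd (snd r)))"

definition Cdelta :: "real^(('z::finite)\<times>((('m::finite)\<times>('p::finite))\<times>('m\<times>'p))) \<Rightarrow> real" where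
  "Cdelta Q = (1 / real CARD('m)) * (\<Sum>j\<in>UNIV. \<Sum>x\<in>UNIV. Q $ (j, (x, x)))"

definition qinf where
  "qinf P pinf phi \<gamma> W R \<theta> \<alpha> =
     matrix_inv (mat 1 - H11 P phi \<gamma> W \<alpha>) *v uq P pinf phi \<gamma> R \<theta> \<alpha>"

definition Qinf where
  "Qinf P pinf phi \<gamma> W R \<theta> \<alpha> =
     matrix_inv (mat 1 - H22 P phi \<gamma> W \<alpha>) *v
       (H21 P phi \<gamma> W R \<theta> \<alpha> *v qinf P pinf phi \<gamma> W R \<theta> \<alpha> + uQ P pinf phi \<gamma> R \<theta> \<alpha>)"

definition deltainf where
  "deltainf P pinf phi \<gamma> W R \<theta> \<alpha> = Cdelta (Qinf P pinf phi \<gamma> W R \<theta> \<alpha>)"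

end

theory Submission
  imports Defs
begin

lemma core_seq:
  fixes M0 M1 M2 :: "real^'n::finite^'n" and a :: "nat \<Rightarrow> real" and x :: "nat \<Rightarrow> real^'n"
  assumes K: "\<And>y. M0 *v y = 0 \<Longrightarrow> (\<forall>l\<in>L. l \<bullet> (M1 *v y) = 0) \<Longrightarrow> y = 0"
    and a: "a \<longlonglongrightarrow> 0" and nx: "\<And>k. norm (x k) = 1"
    and lim1: "(\<lambda>k. M0 *v x k + a k *\<^sub>R (M1 *v x k) + (a k)\<^sup>2 *\<^sub>R (M2 *v x k)) \<longlonglongrightarrow> 0"
    and lim2: "\<And>l. l\<in>L \<Longrightarrow> (\<lambda>k. l \<bullet> (M1 *v x k) + a k * (l \<bullet> (M2 *v x k))) \<longlonglongrightarrow> 0"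
  shows False
proof -
  have "seq_compact (sphere (0::real^'n) 1)"
    by (simp add: compact_imp_seq_compact)
  moreover have "\<forall>k. x k \<in> sphere 0 1" using nx by simp
  ultimately obtain y r where y: "y \<in> sphere 0 1" and r: "strict_mono r" and xr: "(x \<circ> r) \<longlonglongrightarrow> y"
    by (rule seq_compactE)
  have ar: "(a \<circ> r) \<longlonglongrightarrow> 0" using LIMSEQ_subseq_LIMSEQ[OF a r] .
  have c0: "((\<lambda>k. M0 *v x k) \<circ> r) \<longlonglongrightarrow> M0 *v y"
    using bounded_linear.tendsto[OF matrix_vector_mul_bounded_linear xr] by (simp add: o_def)
  have c1: "((\<lambda>k. M1 *v x k) \<circ> r) \<longlonglongrightarrow> M1 *v y"
    using bounded_linear.tendsto[OF matrix_vector_mul_bounded_linear xr] by (simp add: o_def)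
  have c2: "((\<lambda>k. M2 *v x k) \<circ> r) \<longlonglongrightarrow> M2 *v y"
    using bounded_linear.tendsto[OF matrix_vector_mul_bounded_linear xr] by (simp add: o_def)
  have "(\<lambda>k. M0 *v x (r k) + a (r k) *\<^sub>R (M1 *v x (r k)) + (a (r k))\<^sup>2 *\<^sub>R (M2 *v x (r k)))
        \<longlonglongrightarrow> M0 *v y + 0 *\<^sub>R (M1 *v y) + 0\<^sup>2 *\<^sub>R (M2 *v y)"
    using c0 c1 c2 ar by (intro tendsto_intros) (auto simp: o_def)
  moreover have "(\<lambda>k. M0 *v x (r k) + a (r k) *\<^sub>R (M1 *v x (r k)) + (a (r k))\<^sup>2 *\<^sub>R (M2 *v x (r k)))
        \<longlonglongrightarrow> 0"
    using LIMSEQ_subseq_LIMSEQ[OF lim1 r] by (simp add: o_def)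
  ultimately have M0y: "M0 *v y = 0" using LIMSEQ_unique by fastforce
  have "\<forall>l\<in>L. l \<bullet> (M1 *v y) = 0"
  proof
    fix l assume l: "l \<in> L"
    have "(\<lambda>k. l \<bullet> (M1 *v x (r k)) + a (r k) * (l \<bullet> (M2 *v x (r k))))
        \<longlonglongrightarrow> l \<bullet> (M1 *v y) + 0 * (l \<bullet> (M2 *v y))"
      using c1 c2 ar by (intro tendsto_intros) (auto simp: o_def)
    moreover have "(\<lambda>k. l \<bullet> (M1 *v x (r k)) + a (r k) * (l \<bullet> (M2 *v x (r k)))) \<longlonglongrightarrow> 0"
      using LIMSEQ_subseq_LIMSEQ[OF lim2[OF l] r] by (simp add: o_def)
    ultimately show "l \<bullet> (M1 *v y) = 0" using LIMSEQ_unique by fastforce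
  qed
  with K M0y have "y = 0" by blast
  with y show False by simp
qed


lemma inv_Suc_lim: "(\<lambda>k::nat. 1 / (real k + 1)) \<longlonglongrightarrow> 0"
  using LIMSEQ_inverse_real_of_nat by (simp add: inverse_eq_divide add.commute)

lemma core_lower:
  fixes M0 M1 M2 :: "real^'n::finite^'n" and Mf :: "real \<Rightarrow> real^'n^'n"
  assumes Mf: "\<And>\<alpha> x. Mf \<alpha> *v x = M0 *v x + \<alpha> *\<^sub>R (M1 *v x) + \<alpha>\<^sup>2 *\<^sub>R (M2 *v x)"
    and L0: "\<And>l y. l \<in> L \<Longrightarrow> l \<bullet> (M0 *v y) = 0"
    and K: "\<And>y. M0 *v y = 0 \<Longrightarrow> (\<forall>l\<in>L. l \<bullet> (M1 *v y) = 0) \<Longrightarrow> y = 0"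
  shows "\<exists>c>0. \<exists>\<alpha>0>0. \<forall>\<alpha> x. 0 < \<alpha> \<and> \<alpha> < \<alpha>0 \<longrightarrow> c * \<alpha> * norm x \<le> norm (Mf \<alpha> *v x)"
proof (rule ccontr)
  assume "\<not> ?thesis"
  hence h: "\<forall>c>0. \<forall>\<alpha>0>0. \<exists>\<alpha> x. 0 < \<alpha> \<and> \<alpha> < \<alpha>0 \<and> c * \<alpha> * norm x > norm (Mf \<alpha> *v x)"
    by (auto simp: not_le)
  have "\<forall>k::nat. \<exists>\<alpha> z. 0 < \<alpha> \<and> \<alpha> < 1 / (real k + 1) \<and> 1 / (real k + 1) * \<alpha> * norm z > norm (Mf \<alpha> *v z)"
  proof
    fix k :: nat have p: "1 / (real k + 1) > 0" by simp
    from h[rule_format, OF p p] show "\<exists>\<alpha> z. 0 < \<alpha> \<and> \<alpha> < 1 / (real k + 1) \<and> 1 / (real k + 1) * \<alpha> * norm z > norm (Mf \<alpha> *v z)" by blast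
  qed
  then obtain a z where az: "\<And>k. 0 < a k \<and> a k < 1 / (real k + 1) \<and> 1 / (real k + 1) * a k * norm (z k) > norm (Mf (a k) *v z k)"
    by metis
  have zn: "z k \<noteq> 0" for k using az[of k] by auto
  define x where "x k = (1 / norm (z k)) *\<^sub>R z k" for k
  have nx: "norm (x k) = 1" for k using zn by (simp add: x_def)
  have Mx: "Mf (a k) *v x k = (1 / norm (z k)) *\<^sub>R (Mf (a k) *v z k)" for k
    by (simp add: x_def matrix_vector_mult_scaleR)
  have bnd: "norm (Mf (a k) *v x k) \<le> a k / (real k + 1)" for k
  proof -
    have "norm (Mf (a k) *v x k) = norm (Mf (a k) *v z k) / norm (z k)" using Mx by simp
    also have "\<dots> \<le> (1 / (real k + 1) * a k * norm (z k)) / norm (z k)"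
      using az[of k] zn by (intro divide_right_mono) auto
    also have "\<dots> = a k / (real k + 1)" using zn by simp
    finally show ?thesis .
  qed
  have a0: "a \<longlonglongrightarrow> 0"
    by (rule Lim_null_comparison[OF _ inv_Suc_lim]) (use az in \<open>auto intro!: always_eventually less_imp_le simp: abs_of_pos\<close>)
  show False
  proof (rule core_seq[OF K a0 nx])
    show "(\<lambda>k. M0 *v x k + a k *\<^sub>R (M1 *v x k) + (a k)\<^sup>2 *\<^sub>R (M2 *v x k)) \<longlonglongrightarrow> 0"
    proof (rule Lim_null_comparison[OF _ inv_Suc_lim], intro always_eventually allI)
      fix k
      have "norm (M0 *v x k + a k *\<^sub>R (M1 *v x k) + (a k)\<^sup>2 *\<^sub>R (M2 *v x k)) \<le> a k / (real k + 1)"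
        using bnd[of k] by (simp add: Mf)
      also have "\<dots> \<le> 1 / (real k + 1)" using az[of k]
        by (auto simp: divide_simps) (smt (verit) mult_le_cancel_left1 of_nat_0_le_iff)
      finally show "norm (M0 *v x k + a k *\<^sub>R (M1 *v x k) + (a k)\<^sup>2 *\<^sub>R (M2 *v x k)) \<le> 1 / (real k + 1)" .
    qed
  next
    fix l assume l: "l \<in> L"
    have lim: "(\<lambda>k. norm l * (1 / (real k + 1))) \<longlonglongrightarrow> 0"
      using tendsto_mult_right_zero[OF inv_Suc_lim] by simp
    show "(\<lambda>k. l \<bullet> (M1 *v x k) + a k * (l \<bullet> (M2 *v x k))) \<longlonglongrightarrow> 0"
    proof (rule Lim_null_comparison[OF _ lim], intro always_eventually allI)
      fix k
      have eq: "l \<bullet> (M1 *v x k) + a k * (l \<bullet> (M2 *v x k)) = (l \<bullet> (Mf (a k) *v x k)) / a k"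
        using az[of k] L0[OF l, of "x k"]
        by (simp add: Mf inner_add_right power2_eq_square field_simps)
      have "norm ((l \<bullet> (Mf (a k) *v x k)) / a k) \<le> norm l * norm (Mf (a k) *v x k) / a k"
        using az[of k] Cauchy_Schwarz_ineq2[of l "Mf (a k) *v x k"]
        by (simp add: divide_right_mono)
      also have "\<dots> \<le> norm l * (a k / (real k + 1)) / a k"
        using az[of k] bnd[of k] by (intro divide_right_mono mult_left_mono) auto
      also have "\<dots> = norm l * (1 / (real k + 1))" using az[of k] by simp
      finally show "norm (l \<bullet> (M1 *v x k) + a k * (l \<bullet> (M2 *v x k))) \<le> norm l * (1 / (real k + 1))"
        by (simp only: eq)
    qed
  qed
qed

lemma core_bounded:
  fixes M0 M1 M2 :: "real^'n::finite^'n" and Mf :: "real \<Rightarrow> real^'n^'n"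
  assumes Mf: "\<And>\<alpha> x. Mf \<alpha> *v x = M0 *v x + \<alpha> *\<^sub>R (M1 *v x) + \<alpha>\<^sup>2 *\<^sub>R (M2 *v x)"
    and L0: "\<And>l y. l \<in> L \<Longrightarrow> l \<bullet> (M0 *v y) = 0"
    and K: "\<And>y. M0 *v y = 0 \<Longrightarrow> (\<forall>l\<in>L. l \<bullet> (M1 *v y) = 0) \<Longrightarrow> y = 0"
    and u: "\<And>l. l \<in> L \<Longrightarrow> l \<bullet> u = 0"
  shows "\<exists>C. \<exists>\<alpha>0>0. \<forall>\<alpha> z. 0 < \<alpha> \<and> \<alpha> < \<alpha>0 \<and> Mf \<alpha> *v z = u \<longrightarrow> norm z \<le> C"
proof (rule ccontr)
  assume "\<not> ?thesis"
  hence h: "\<forall>C. \<forall>\<alpha>0>0. \<exists>\<alpha> z. 0 < \<alpha> \<and> \<alpha> < \<alpha>0 \<and> Mf \<alpha> *v z = u \<and> norm z > C"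
    by (auto simp: not_le)
  have "\<forall>k::nat. \<exists>\<alpha> z. 0 < \<alpha> \<and> \<alpha> < 1 / (real k + 1) \<and> Mf \<alpha> *v z = u \<and> norm z > real k + 1"
  proof
    fix k :: nat have p: "1 / (real k + 1) > 0" by simp
    from h[rule_format, OF p, of "real k + 1"] show "\<exists>\<alpha> z. 0 < \<alpha> \<and> \<alpha> < 1 / (real k + 1) \<and> Mf \<alpha> *v z = u \<and> norm z > real k + 1" by blast
  qed
  then obtain a z where az: "\<And>k. 0 < a k \<and> a k < 1 / (real k + 1) \<and> Mf (a k) *v z k = u \<and> norm (z k) > real k + 1"
    by metis
  have zn: "norm (z k) > 0" for k using az[of k] by (smt (verit) of_nat_0_le_iff)
  define x where "x k = (1 / norm (z k)) *\<^sub>R z k" for k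
  have nx: "norm (x k) = 1" for k using zn by (simp add: x_def)
  have Mx: "Mf (a k) *v x k = (1 / norm (z k)) *\<^sub>R u" for k
    using az[of k] by (simp add: x_def matrix_vector_mult_scaleR)
  have a0: "a \<longlonglongrightarrow> 0"
    by (rule Lim_null_comparison[OF _ inv_Suc_lim]) (use az in \<open>auto intro!: always_eventually less_imp_le simp: abs_of_pos\<close>)
  show False
  proof (rule core_seq[OF K a0 nx])
    have lim: "(\<lambda>k. norm u * (1 / (real k + 1))) \<longlonglongrightarrow> 0"
      using tendsto_mult_right_zero[OF inv_Suc_lim] by simp
    show "(\<lambda>k. M0 *v x k + a k *\<^sub>R (M1 *v x k) + (a k)\<^sup>2 *\<^sub>R (M2 *v x k)) \<longlonglongrightarrow> 0"
    proof (rule Lim_null_comparison[OF _ lim], intro always_eventually allI)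
      fix k
      have "norm (M0 *v x k + a k *\<^sub>R (M1 *v x k) + (a k)\<^sup>2 *\<^sub>R (M2 *v x k)) = norm u / norm (z k)"
        using zn[of k] by (simp add: Mf[symmetric] Mx)
      also have "\<dots> \<le> norm u * (1 / (real k + 1))"
        using az[of k] zn[of k] by (simp add: divide_simps mult_left_mono)
      finally show "norm (M0 *v x k + a k *\<^sub>R (M1 *v x k) + (a k)\<^sup>2 *\<^sub>R (M2 *v x k)) \<le> norm u * (1 / (real k + 1))" .
    qed
  next
    fix l assume l: "l \<in> L"
    have "l \<bullet> (M1 *v x k) + a k * (l \<bullet> (M2 *v x k)) = 0" for k
    proof -
      have "a k * (l \<bullet> (M1 *v x k) + a k * (l \<bullet> (M2 *v x k))) = l \<bullet> (Mf (a k) *v x k)"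
        using L0[OF l, of "x k"] by (simp add: Mf inner_add_right power2_eq_square algebra_simps)
      also have "\<dots> = 0" using u[OF l] by (simp add: Mx)
      finally show ?thesis using az[of k] by simp
    qed
    thus "(\<lambda>k. l \<bullet> (M1 *v x k) + a k * (l \<bullet> (M2 *v x k))) \<longlonglongrightarrow> 0" by simp
  qed
qed

lemma sum_UNIV_pair: "(\<Sum>r\<in>UNIV. f r) = (\<Sum>j\<in>UNIV. \<Sum>a\<in>UNIV. f (j, a))"
  by (metis UNIV_Times_UNIV sum.cartesian_product')

lemma inner_Tv: "t \<bullet> (V *v x) = (transpose V *v t) \<bullet> (x::real^'n::finite)"
  by (metis dot_lmul_matrix vector_transpose_matrix transpose_transpose)

lemma inner_vec_real: "(x::real^'n::finite) \<bullet> y = (\<Sum>i\<in>UNIV. x $ i * y $ i)"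
  by (simp add: inner_vec_def)

lemma norm_sq_vec: "(norm (x::real^'n::finite))\<^sup>2 = (\<Sum>i\<in>UNIV. (x $ i)\<^sup>2)"
  by (metis (no_types) dot_square_norm inner_vec_real power2_eq_square sum.cong)

lemma ds_nonneg: "doubly_stochastic V \<Longrightarrow> 0 \<le> V $ i $ j"
  by (simp add: doubly_stochastic_def)
lemma ds_row: "doubly_stochastic V \<Longrightarrow> (\<Sum>j\<in>UNIV. V $ i $ j) = 1"
  by (simp add: doubly_stochastic_def)
lemma ds_col: "doubly_stochastic V \<Longrightarrow> (\<Sum>i\<in>UNIV. V $ i $ j) = 1"
  by (simp add: doubly_stochastic_def)

lemma ds_transpose: "doubly_stochastic V \<Longrightarrow> doubly_stochastic (transpose V)"
  by (simp add: doubly_stochastic_def transpose_def)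

lemma jensen_identity:
  fixes V :: "real^'n::finite^'n" and z :: "real^'n"
  assumes V: "doubly_stochastic V"
  shows "(\<Sum>x\<in>UNIV. ((V *v z) $ x)\<^sup>2) + (\<Sum>x\<in>UNIV. \<Sum>y\<in>UNIV. V $ x $ y * (z $ y - (V *v z) $ x)\<^sup>2)
       = (\<Sum>y\<in>UNIV. (z $ y)\<^sup>2)"
proof -
  have row: "(\<Sum>y\<in>UNIV. V $ x $ y * (z $ y - (V *v z) $ x)\<^sup>2)
      = (\<Sum>y\<in>UNIV. V $ x $ y * (z $ y)\<^sup>2) - ((V *v z) $ x)\<^sup>2" for x
  proof -
    let ?m = "(V *v z) $ x"
    have m: "?m = (\<Sum>y\<in>UNIV. V $ x $ y * z $ y)" by (simp add: matrix_vector_mult_def)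
    have "(\<Sum>y\<in>UNIV. V $ x $ y * (z $ y - ?m)\<^sup>2)
        = (\<Sum>y\<in>UNIV. V $ x $ y * (z $ y)\<^sup>2) - 2 * ?m * (\<Sum>y\<in>UNIV. V $ x $ y * z $ y)
          + ?m\<^sup>2 * (\<Sum>y\<in>UNIV. V $ x $ y)"
      by (simp add: power2_eq_square algebra_simps sum.distrib sum_subtractf sum_distrib_left)
    also have "\<dots> = (\<Sum>y\<in>UNIV. V $ x $ y * (z $ y)\<^sup>2) - ?m\<^sup>2"
      using ds_row[OF V, of x] by (simp add: m[symmetric] power2_eq_square)
    finally show ?thesis .
  qed
  have "(\<Sum>x\<in>UNIV. ((V *v z) $ x)\<^sup>2) + (\<Sum>x\<in>UNIV. \<Sum>y\<in>UNIV. V $ x $ y * (z $ y - (V *v z) $ x)\<^sup>2)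
      = (\<Sum>x\<in>UNIV. \<Sum>y\<in>UNIV. V $ x $ y * (z $ y)\<^sup>2)"
    by (simp add: row sum_subtractf)
  also have "\<dots> = (\<Sum>y\<in>UNIV. (\<Sum>x\<in>UNIV. V $ x $ y) * (z $ y)\<^sup>2)"
    by (subst sum.swap) (simp add: sum_distrib_right)
  also have "\<dots> = (\<Sum>y\<in>UNIV. (z $ y)\<^sup>2)" using ds_col[OF V] by simp
  finally show ?thesis .
qed

lemma ds_contract_sq:
  fixes V :: "real^'n::finite^'n"
  assumes V: "doubly_stochastic V"
  shows "(norm (V *v z))\<^sup>2 + (\<Sum>x\<in>UNIV. \<Sum>y\<in>UNIV. V $ x $ y * (z $ y - (V *v z) $ x)\<^sup>2) = (norm z)\<^sup>2"
  using jensen_identity[OF V, of z] by (simp add: norm_sq_vec)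

lemma ds_contract:
  fixes V :: "real^'n::finite^'n"
  assumes V: "doubly_stochastic V"
  shows "norm (V *v z) \<le> norm z"
proof -
  have "0 \<le> (\<Sum>x\<in>UNIV. \<Sum>y\<in>UNIV. V $ x $ y * (z $ y - (V *v z) $ x)\<^sup>2)"
    using ds_nonneg[OF V] by (intro sum_nonneg mult_nonneg_nonneg) auto
  hence "(norm (V *v z))\<^sup>2 \<le> (norm z)\<^sup>2" using ds_contract_sq[OF V, of z] by linarith
  thus ?thesis by (simp add: power2_le_iff_abs_le)
qed

lemma ds_fix_transpose:
  fixes V :: "real^'n::finite^'n"
  assumes V: "doubly_stochastic V" and s: "V *v s = s"
  shows "transpose V *v s = s"
proof -
  let ?u = "transpose V *v s"
  have "(norm (?u - s))\<^sup>2 = (?u - s) \<bullet> (?u - s)" by (simp add: dot_square_norm)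
  also have "\<dots> = ?u \<bullet> ?u - 2 * (?u \<bullet> s) + s \<bullet> s"
    by (simp add: inner_diff_left inner_diff_right inner_commute)
  also have "?u \<bullet> s = s \<bullet> s" using inner_Tv[of s V s] s by simp
  also have "?u \<bullet> ?u - 2 * (s \<bullet> s) + s \<bullet> s = (norm ?u)\<^sup>2 - (norm s)\<^sup>2"
    by (simp add: dot_square_norm)
  finally have eq: "(norm (?u - s))\<^sup>2 = (norm ?u)\<^sup>2 - (norm s)\<^sup>2" .
  have "norm ?u \<le> norm s" by (rule ds_contract[OF ds_transpose[OF V]])
  hence "(norm ?u)\<^sup>2 \<le> (norm s)\<^sup>2" by (simp add: power_mono)
  hence "(norm (?u - s))\<^sup>2 \<le> 0" using eq by simp
  thus ?thesis by simp
qed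

lemma sum4:
  fixes a :: "'i \<Rightarrow> real"
  shows "(\<Sum>i\<in>I. \<Sum>b\<in>B. a i * e b * (\<Sum>l\<in>L. \<Sum>c\<in>C. f i l * g b c * y l c))
       = (\<Sum>l\<in>L. \<Sum>c\<in>C. (\<Sum>i\<in>I. a i * f i l) * (\<Sum>b\<in>B. e b * g b c) * y l c)"
proof -
  have "(\<Sum>i\<in>I. \<Sum>b\<in>B. a i * e b * (\<Sum>l\<in>L. \<Sum>c\<in>C. f i l * g b c * y l c))
     = (\<Sum>i\<in>I. \<Sum>b\<in>B. \<Sum>l\<in>L. \<Sum>c\<in>C. a i * f i l * (e b * g b c) * y l c)"
    by (simp add: sum_distrib_left ac_simps)
  also have "\<dots> = (\<Sum>i\<in>I. \<Sum>l\<in>L. \<Sum>b\<in>B. \<Sum>c\<in>C. a i * f i l * (e b * g b c) * y l c)"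
    by (rule sum.cong[OF refl], rule sum.swap)
  also have "\<dots> = (\<Sum>l\<in>L. \<Sum>i\<in>I. \<Sum>b\<in>B. \<Sum>c\<in>C. a i * f i l * (e b * g b c) * y l c)"
    by (rule sum.swap)
  also have "\<dots> = (\<Sum>l\<in>L. \<Sum>i\<in>I. \<Sum>c\<in>C. \<Sum>b\<in>B. a i * f i l * (e b * g b c) * y l c)"
    by (intro sum.cong refl sum.swap)
  also have "\<dots> = (\<Sum>l\<in>L. \<Sum>c\<in>C. \<Sum>i\<in>I. \<Sum>b\<in>B. a i * f i l * (e b * g b c) * y l c)"
    by (intro sum.cong refl sum.swap)
  also have "\<dots> = (\<Sum>l\<in>L. \<Sum>c\<in>C. (\<Sum>i\<in>I. a i * f i l) * (\<Sum>b\<in>B. e b * g b c) * y l c)"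
    by (simp add: sum_distrib_left sum_distrib_right ac_simps)
  finally show ?thesis .
qed

lemma mpow_commute: "mpow A k ** A = A ** mpow A k"
proof (induction k)
  case 0 show ?case by simp
next
  case (Suc k) show ?case by (simp only: mpow.simps) (metis Suc.IH matrix_mul_assoc)
qed

lemma mpow_Suc': "mpow A (Suc k) = mpow A k ** A"
  by (simp only: mpow.simps mpow_commute)

lemma mpow_contract: "doubly_stochastic V \<Longrightarrow> norm (mpow V k *v x) \<le> norm x"
proof (induction k)
  case 0 thus ?case by simp
next
  case (Suc k)
  have "norm (mpow V (Suc k) *v x) = norm (V *v (mpow V k *v x))"
    by (simp add: matrix_vector_mul_assoc)
  also have "\<dots> \<le> norm (mpow V k *v x)" by (rule ds_contract[OF Suc.prems])
  finally show ?case using Suc by simp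
qed

lemma st_nonneg: "stochastic_matrix P \<Longrightarrow> 0 \<le> P $ i $ j"
  by (simp add: stochastic_matrix_def)
lemma st_row: "stochastic_matrix P \<Longrightarrow> (\<Sum>j\<in>UNIV. P $ i $ j) = 1"
  by (simp add: stochastic_matrix_def)

lemma mpow_stochastic: "stochastic_matrix P \<Longrightarrow> stochastic_matrix (mpow P k)"
proof (induction k)
  case 0 thus ?case
    by (auto simp: stochastic_matrix_def mat_def sum.delta)
next
  case (Suc k)
  have IH: "stochastic_matrix (mpow P k)" using Suc by simp
  have nn: "0 \<le> mpow P (Suc k) $ i $ j" for i j
    using st_nonneg[OF Suc.prems] st_nonneg[OF IH]
    by (simp add: matrix_matrix_mult_def sum_nonneg)
  have rs: "(\<Sum>j\<in>UNIV. mpow P (Suc k) $ i $ j) = 1" for i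
  proof -
    have "(\<Sum>j\<in>UNIV. mpow P (Suc k) $ i $ j) = (\<Sum>j\<in>UNIV. \<Sum>l\<in>UNIV. P $ i $ l * mpow P k $ l $ j)"
      by (simp add: matrix_matrix_mult_def)
    also have "\<dots> = (\<Sum>l\<in>UNIV. P $ i $ l * (\<Sum>j\<in>UNIV. mpow P k $ l $ j))"
      by (subst sum.swap) (simp add: sum_distrib_left)
    also have "\<dots> = 1" using st_row[OF IH] st_row[OF Suc.prems] by simp
    finally show ?thesis .
  qed
  show ?case using nn rs by (simp add: stochastic_matrix_def)
qed

lemma lim_nonneg:
  assumes "stochastic_matrix Q" "limiting_distribution Q pinf"
  shows "0 \<le> pinf $ j"
proof -
  have "(\<lambda>k. mpow Q k $ undefined $ j) \<longlonglongrightarrow> pinf $ j"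
    using assms(2) by (simp add: limiting_distribution_def)
  moreover have "\<forall>k. 0 \<le> mpow Q k $ undefined $ j"
    using st_nonneg[OF mpow_stochastic[OF assms(1)]] by blast
  ultimately show ?thesis using LIMSEQ_le_const by blast
qed

lemma lim_sum:
  assumes "stochastic_matrix Q" "limiting_distribution Q pinf"
  shows "(\<Sum>j\<in>UNIV. pinf $ j) = 1"
proof -
  have "(\<lambda>k. \<Sum>j\<in>UNIV. mpow Q k $ undefined $ j) \<longlonglongrightarrow> (\<Sum>j\<in>UNIV. pinf $ j)"
    using assms(2) by (intro tendsto_sum) (simp add: limiting_distribution_def)
  moreover have "(\<lambda>k. \<Sum>j\<in>UNIV. mpow Q k $ undefined $ j) = (\<lambda>k. 1)"
    using st_row[OF mpow_stochastic[OF assms(1)]] by simp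
  ultimately have "(\<lambda>k. 1::real) \<longlonglongrightarrow> (\<Sum>j\<in>UNIV. pinf $ j)" by simp
  from LIMSEQ_unique[OF this tendsto_const] show ?thesis by simp
qed

lemma lim_stat:
  assumes "stochastic_matrix Q" "limiting_distribution Q pinf"
  shows "(\<Sum>i\<in>UNIV. pinf $ i * Q $ i $ j) = pinf $ j"
proof -
  have L: "\<And>i j. (\<lambda>k. mpow Q k $ i $ j) \<longlonglongrightarrow> pinf $ j"
    using assms(2) by (simp add: limiting_distribution_def)
  have "(\<lambda>k. \<Sum>l\<in>UNIV. mpow Q k $ undefined $ l * Q $ l $ j) \<longlonglongrightarrow> (\<Sum>l\<in>UNIV. pinf $ l * Q $ l $ j)"
    by (intro tendsto_intros L)
  moreover have "(\<lambda>k. \<Sum>l\<in>UNIV. mpow Q k $ undefined $ l * Q $ l $ j) = (\<lambda>k. mpow Q (Suc k) $ undefined $ j)"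
    by (simp add: mpow_Suc' matrix_matrix_mult_def del: mpow.simps)
  moreover have "(\<lambda>k. mpow Q (Suc k) $ undefined $ j) \<longlonglongrightarrow> pinf $ j"
    using LIMSEQ_Suc[OF L] .
  ultimately have "(\<lambda>k. mpow Q (Suc k) $ undefined $ j) \<longlonglongrightarrow> (\<Sum>l\<in>UNIV. pinf $ l * Q $ l $ j)"
    by simp
  from LIMSEQ_unique[OF this \<open>(\<lambda>k. mpow Q (Suc k) $ undefined $ j) \<longlonglongrightarrow> pinf $ j\<close>] show ?thesis .
qed

definition blk :: "real^'z^'z \<Rightarrow> ('z \<Rightarrow> real^'x^'x) \<Rightarrow> real^('z::finite\<times>'x::finite)^('z\<times>'x)" where
  "blk Q Hb = (\<chi> r c. Q $ fst c $ fst r * Hb (fst c) $ snd r $ snd c)"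

definition lift :: "real^'x \<Rightarrow> real^('z::finite\<times>'x::finite)" where
  "lift t = (\<chi> r. t $ snd r)"

lemma blk_mv: "(blk Q Hb *v y) $ (j, a) = (\<Sum>i\<in>UNIV. \<Sum>b\<in>UNIV. Q $ i $ j * Hb i $ a $ b * y $ (i, b))"
  unfolding blk_def matrix_vector_mult_def
  by (subst sum_UNIV_pair) (simp add: sum_distrib_left)

lemma delta_sum: "(\<Sum>b\<in>UNIV. (if a = b then 1 else 0) * f b) = (f a::real)" for a :: "'a::finite"
  by (simp add: if_distrib[where f="\<lambda>x. x * _"] cong: if_cong)

lemma blk_fix:
  fixes Q :: "real^'z::finite^'z" and V :: "real^'x::finite^'x" and y :: "real^('z\<times>'x)"
  assumes Qs: "stochastic_matrix Q" and lim: "limiting_distribution Q pinf"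
    and Vd: "doubly_stochastic V" and fx: "blk Q (\<lambda>_. V) *v y = y"
  defines "S \<equiv> (\<chi> a. \<Sum>j\<in>UNIV. y $ (j, a))"
  shows "\<And>j a. y $ (j, a) = pinf $ j * S $ a" and "V *v S = S"
proof -
  have F: "y $ (j, a) = (\<Sum>i\<in>UNIV. \<Sum>b\<in>UNIV. Q $ i $ j * V $ a $ b * y $ (i, b))" for j a
    using arg_cong[OF fx, of "\<lambda>v. v $ (j, a)"] by (simp add: blk_mv)
  show VS: "V *v S = S"
  proof -
    have "S $ a = (V *v S) $ a" for a
    proof -
      have "S $ a = (\<Sum>j\<in>UNIV. \<Sum>i\<in>UNIV. \<Sum>b\<in>UNIV. Q $ i $ j * V $ a $ b * y $ (i, b))"
        unfolding S_def by (simp add: F[symmetric])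
      also have "\<dots> = (\<Sum>i\<in>UNIV. \<Sum>j\<in>UNIV. \<Sum>b\<in>UNIV. Q $ i $ j * V $ a $ b * y $ (i, b))"
        by (rule sum.swap)
      also have "\<dots> = (\<Sum>i\<in>UNIV. \<Sum>b\<in>UNIV. \<Sum>j\<in>UNIV. Q $ i $ j * V $ a $ b * y $ (i, b))"
        by (intro sum.cong refl sum.swap)
      also have "\<dots> = (\<Sum>i\<in>UNIV. \<Sum>b\<in>UNIV. (\<Sum>j\<in>UNIV. Q $ i $ j) * V $ a $ b * y $ (i, b))"
        by (simp add: sum_distrib_right)
      also have "\<dots> = (\<Sum>i\<in>UNIV. \<Sum>b\<in>UNIV. V $ a $ b * y $ (i, b))"
        using st_row[OF Qs] by simp
      also have "\<dots> = (V *v S) $ a"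
        unfolding S_def matrix_vector_mult_def by (subst sum.swap) (simp add: sum_distrib_left)
      finally show ?thesis .
    qed
    thus ?thesis by (simp add: vec_eq_iff)
  qed
  have iter: "y $ (j, a) = (\<Sum>i\<in>UNIV. \<Sum>b\<in>UNIV. mpow Q k $ i $ j * mpow V k $ a $ b * y $ (i, b))" for k j a
  proof (induction k arbitrary: j a)
    case 0
    have "(\<Sum>i\<in>UNIV. \<Sum>b\<in>UNIV. mpow Q 0 $ i $ j * mpow V 0 $ a $ b * y $ (i, b))
        = (\<Sum>i\<in>UNIV. (if j = i then 1 else 0) * (\<Sum>b\<in>UNIV. (if a = b then 1 else 0) * y $ (i, b)))"
      by (simp add: mat_def sum_distrib_left mult.assoc eq_commute[of i j for i])
    also have "\<dots> = y $ (j, a)" by (simp only: delta_sum)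
    finally show ?case by simp
  next
    case (Suc k)
    have "y $ (j, a) = (\<Sum>i\<in>UNIV. \<Sum>b\<in>UNIV. mpow Q k $ i $ j * mpow V k $ a $ b *
            (\<Sum>l\<in>UNIV. \<Sum>c\<in>UNIV. Q $ l $ i * V $ b $ c * y $ (l, c)))"
      by (subst Suc.IH) (simp add: F[symmetric])
    also have "\<dots> = (\<Sum>l\<in>UNIV. \<Sum>c\<in>UNIV. (\<Sum>i\<in>UNIV. mpow Q k $ i $ j * Q $ l $ i) *
            (\<Sum>b\<in>UNIV. mpow V k $ a $ b * V $ b $ c) * y $ (l, c))"
      by (rule sum4)
    also have "\<dots> = (\<Sum>l\<in>UNIV. \<Sum>c\<in>UNIV. mpow Q (Suc k) $ l $ j * mpow V (Suc k) $ a $ c * y $ (l, c))"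
      by (simp only: mpow_Suc'[of V k]) (simp add: matrix_matrix_mult_def mult.commute)
    finally show ?case .
  qed
  define col where "col i = (\<chi> b. y $ (i, b))" for i
  define e where "e j k = (\<Sum>i\<in>UNIV. \<bar>mpow Q k $ i $ j - pinf $ j\<bar> * norm (col i))" for j k
  have decomp: "col j - pinf $ j *\<^sub>R (mpow V k *v S) = (\<Sum>i\<in>UNIV. (mpow Q k $ i $ j - pinf $ j) *\<^sub>R (mpow V k *v col i))" for j k
  proof -
    have "(col j - pinf $ j *\<^sub>R (mpow V k *v S)) $ a = (\<Sum>i\<in>UNIV. (mpow Q k $ i $ j - pinf $ j) *\<^sub>R (mpow V k *v col i)) $ a" for a
    proof -
      have e2: "pinf $ j * (\<Sum>b\<in>UNIV. mpow V k $ a $ b * (\<Sum>i\<in>UNIV. y $ (i, b)))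
          = (\<Sum>i\<in>UNIV. \<Sum>b\<in>UNIV. pinf $ j * mpow V k $ a $ b * y $ (i, b))"
        by (simp add: sum_distrib_left mult.assoc) (rule sum.swap)
      have "(col j - pinf $ j *\<^sub>R (mpow V k *v S)) $ a
          = y $ (j, a) - pinf $ j * (\<Sum>b\<in>UNIV. mpow V k $ a $ b * (\<Sum>i\<in>UNIV. y $ (i, b)))"
        by (simp add: col_def S_def matrix_vector_mult_def)
      also have "\<dots> = (\<Sum>i\<in>UNIV. \<Sum>b\<in>UNIV. mpow Q k $ i $ j * mpow V k $ a $ b * y $ (i, b))
            - (\<Sum>i\<in>UNIV. \<Sum>b\<in>UNIV. pinf $ j * mpow V k $ a $ b * y $ (i, b))"
        by (simp only: e2 iter[of j a k, symmetric])
      also have "\<dots> = (\<Sum>i\<in>UNIV. (mpow Q k $ i $ j - pinf $ j) * (\<Sum>b\<in>UNIV. mpow V k $ a $ b * y $ (i, b)))"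
        by (simp add: sum_subtractf[symmetric] sum_distrib_left algebra_simps)
      also have "\<dots> = (\<Sum>i\<in>UNIV. (mpow Q k $ i $ j - pinf $ j) *\<^sub>R (mpow V k *v col i)) $ a"
        by (simp add: sum_component col_def matrix_vector_mult_def)
      finally show ?thesis .
    qed
    thus ?thesis by (simp add: vec_eq_iff)
  qed
  have bnd: "norm (col j - pinf $ j *\<^sub>R (mpow V k *v S)) \<le> e j k" for j k
  proof -
    have "norm (col j - pinf $ j *\<^sub>R (mpow V k *v S))
        \<le> (\<Sum>i\<in>UNIV. norm ((mpow Q k $ i $ j - pinf $ j) *\<^sub>R (mpow V k *v col i)))"
      unfolding decomp by (rule norm_sum)
    also have "\<dots> \<le> e j k"
      unfolding e_def using mpow_contract[OF Vd]
      by (intro sum_mono) (simp add: mult_left_mono)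
    finally show ?thesis .
  qed
  have elim: "(\<lambda>k. e j k) \<longlonglongrightarrow> 0" for j
  proof -
    have "(\<lambda>k. e j k) \<longlonglongrightarrow> (\<Sum>i\<in>UNIV. \<bar>pinf $ j - pinf $ j\<bar> * norm (col i))"
      unfolding e_def using lim
      by (intro tendsto_sum tendsto_mult_right tendsto_rabs tendsto_diff tendsto_const)
         (simp add: limiting_distribution_def)
    thus ?thesis by simp
  qed
  have cz: "pinf $ l *\<^sub>R col j - pinf $ j *\<^sub>R col l = 0" for j l
  proof -
    have b: "norm (pinf $ l *\<^sub>R col j - pinf $ j *\<^sub>R col l) \<le> \<bar>pinf $ l\<bar> * e j k + \<bar>pinf $ j\<bar> * e l k" for k
    proof -
      have "pinf $ l *\<^sub>R col j - pinf $ j *\<^sub>R col l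
          = pinf $ l *\<^sub>R (col j - pinf $ j *\<^sub>R (mpow V k *v S)) - pinf $ j *\<^sub>R (col l - pinf $ l *\<^sub>R (mpow V k *v S))"
        by (simp add: algebra_simps)
      also have "norm \<dots> \<le> \<bar>pinf $ l\<bar> * norm (col j - pinf $ j *\<^sub>R (mpow V k *v S)) + \<bar>pinf $ j\<bar> * norm (col l - pinf $ l *\<^sub>R (mpow V k *v S))"
        by (rule order_trans[OF norm_triangle_ineq4]) simp
      also have "\<dots> \<le> \<bar>pinf $ l\<bar> * e j k + \<bar>pinf $ j\<bar> * e l k"
        using bnd by (intro add_mono mult_left_mono) auto
      finally show ?thesis .
    qed
    have "(\<lambda>k. \<bar>pinf $ l\<bar> * e j k + \<bar>pinf $ j\<bar> * e l k) \<longlonglongrightarrow> \<bar>pinf $ l\<bar> * 0 + \<bar>pinf $ j\<bar> * 0"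
      by (intro tendsto_intros elim)
    hence "norm (pinf $ l *\<^sub>R col j - pinf $ j *\<^sub>R col l) \<le> 0"
      using b by (intro LIMSEQ_le_const[where X = "\<lambda>k. \<bar>pinf $ l\<bar> * e j k + \<bar>pinf $ j\<bar> * e l k"]) auto
    thus ?thesis by simp
  qed
  fix j a
  have "pinf $ l * y $ (j, a) = pinf $ j * y $ (l, a)" for l
    using arg_cong[OF cz[of l j], of "\<lambda>v. v $ a"] by (simp add: col_def)
  hence "(\<Sum>l\<in>UNIV. pinf $ l * y $ (j, a)) = (\<Sum>l\<in>UNIV. pinf $ j * y $ (l, a))" by simp
  thus "y $ (j, a) = pinf $ j * S $ a"
    using lim_sum[OF Qs lim] by (simp add: S_def sum_distrib_right[symmetric] sum_distrib_left)
qed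


lemma inner_lift: "lift t \<bullet> v = (\<Sum>j\<in>UNIV. \<Sum>a\<in>UNIV. t $ a * v $ (j, a))"
  by (simp add: inner_vec_real lift_def sum_UNIV_pair[where f = "\<lambda>r. t $ snd r * v $ r"])

lemma lift_blk:
  fixes Q :: "real^'z::finite^'z" and Hb :: "'z \<Rightarrow> real^'x::finite^'x"
  assumes Qs: "stochastic_matrix Q"
  shows "lift t \<bullet> (blk Q Hb *v y) = (\<Sum>i\<in>UNIV. \<Sum>b\<in>UNIV. (\<Sum>a\<in>UNIV. t $ a * Hb i $ a $ b) * y $ (i, b))"
proof -
  have "lift t \<bullet> (blk Q Hb *v y) = (\<Sum>j\<in>UNIV. \<Sum>a\<in>UNIV. t $ a * (\<Sum>i\<in>UNIV. \<Sum>b\<in>UNIV. Q $ i $ j * Hb i $ a $ b * y $ (i, b)))"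
    by (simp add: inner_lift blk_mv)
  also have "\<dots> = (\<Sum>j\<in>UNIV. \<Sum>a\<in>UNIV. \<Sum>i\<in>UNIV. Q $ i $ j * (\<Sum>b\<in>UNIV. t $ a * Hb i $ a $ b * y $ (i, b)))"
    by (simp add: sum_distrib_left ac_simps)
  also have "\<dots> = (\<Sum>j\<in>UNIV. \<Sum>i\<in>UNIV. Q $ i $ j * (\<Sum>a\<in>UNIV. \<Sum>b\<in>UNIV. t $ a * Hb i $ a $ b * y $ (i, b)))"
    by (intro sum.cong refl) (simp add: sum_distrib_left, rule sum.swap)
  also have "\<dots> = (\<Sum>i\<in>UNIV. (\<Sum>j\<in>UNIV. Q $ i $ j) * (\<Sum>a\<in>UNIV. \<Sum>b\<in>UNIV. t $ a * Hb i $ a $ b * y $ (i, b)))"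
    by (subst sum.swap) (simp add: sum_distrib_right)
  also have "\<dots> = (\<Sum>i\<in>UNIV. \<Sum>a\<in>UNIV. \<Sum>b\<in>UNIV. t $ a * Hb i $ a $ b * y $ (i, b))"
    using st_row[OF Qs] by simp
  also have "\<dots> = (\<Sum>i\<in>UNIV. \<Sum>b\<in>UNIV. (\<Sum>a\<in>UNIV. t $ a * Hb i $ a $ b) * y $ (i, b))"
    by (rule sum.cong[OF refl]) (simp add: sum_distrib_right, rule sum.swap)
  finally show ?thesis .
qed

lemma neg_mv: "(- A) *v x = - (A *v (x::real^'n::finite))"
  by (simp add: matrix_vector_mult_def vec_eq_iff sum_negf)

lemma sum3_swap: "(\<Sum>i\<in>I. \<Sum>b\<in>B. \<Sum>a\<in>A. f i b a) = (\<Sum>a\<in>A. \<Sum>b\<in>B. \<Sum>i\<in>I. f i b a)"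
proof -
  have "(\<Sum>i\<in>I. \<Sum>b\<in>B. \<Sum>a\<in>A. f i b a) = (\<Sum>b\<in>B. \<Sum>i\<in>I. \<Sum>a\<in>A. f i b a)" by (rule sum.swap)
  also have "\<dots> = (\<Sum>b\<in>B. \<Sum>a\<in>A. \<Sum>i\<in>I. f i b a)" by (intro sum.cong refl sum.swap)
  also have "\<dots> = (\<Sum>a\<in>A. \<Sum>b\<in>B. \<Sum>i\<in>I. f i b a)" by (rule sum.swap)
  finally show ?thesis .
qed

lemma block_conds:
  fixes Q :: "real^'z::finite^'z" and V :: "real^'x::finite^'x" and D :: "'z \<Rightarrow> real^'x^'x"
  assumes Qs: "stochastic_matrix Q" and lim: "limiting_distribution Q pinf"
    and Vd: "doubly_stochastic V"
    and test: "\<And>s. V *v s = s \<Longrightarrow> s \<noteq> 0 \<Longrightarrow>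
                 \<exists>t. transpose V *v t = t \<and> t \<bullet> ((\<Sum>i\<in>UNIV. pinf $ i *\<^sub>R D i) *v s) \<noteq> 0"
  shows "\<And>l y. l \<in> {lift t | t. transpose V *v t = t} \<Longrightarrow> l \<bullet> ((mat 1 - blk Q (\<lambda>_. V)) *v y) = 0"
    and "\<And>y. (mat 1 - blk Q (\<lambda>_. V)) *v y = 0 \<Longrightarrow>
            (\<forall>l\<in>{lift t | t. transpose V *v t = t}. l \<bullet> ((- blk Q D) *v y) = 0) \<Longrightarrow> y = 0"
proof -
  fix l y :: "real^('z\<times>'x)" assume "l \<in> {lift t | t. transpose V *v t = t}"
  then obtain t where l: "l = lift t" and t: "transpose V *v t = t" by blast
  have tb: "(\<Sum>a\<in>UNIV. t $ a * V $ a $ b) = t $ b" for b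
    using arg_cong[OF t, of "\<lambda>v. v $ b"] by (simp add: matrix_vector_mult_def transpose_def mult.commute)
  have "lift t \<bullet> (blk Q (\<lambda>_. V) *v y) = (\<Sum>i\<in>UNIV. \<Sum>b\<in>UNIV. (\<Sum>a\<in>UNIV. t $ a * V $ a $ b) * y $ (i, b))"
    by (rule lift_blk[OF Qs])
  also have "\<dots> = lift t \<bullet> y" by (simp add: tb inner_lift)
  finally have eq: "lift t \<bullet> (blk Q (\<lambda>_. V) *v y) = lift t \<bullet> y" .
  have "(mat 1 - blk Q (\<lambda>_. V)) *v y = y - blk Q (\<lambda>_. V) *v y"
    by (simp add: matrix_vector_mult_diff_rdistrib)
  thus "l \<bullet> ((mat 1 - blk Q (\<lambda>_. V)) *v y) = 0"
    by (simp only: l inner_diff_right eq) 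
next
  fix y :: "real^('z\<times>'x)" assume M0: "(mat 1 - blk Q (\<lambda>_. V)) *v y = 0"
    and H: "\<forall>l\<in>{lift t | t. transpose V *v t = t}. l \<bullet> ((- blk Q D) *v y) = 0"
  have "y - blk Q (\<lambda>_. V) *v y = 0"
    using M0 by (simp only: matrix_vector_mult_diff_rdistrib matrix_vector_mul_lid)
  hence fx: "blk Q (\<lambda>_. V) *v y = y" by (simp only: right_minus_eq)
  define S where "S = (\<chi> a. \<Sum>j\<in>UNIV. y $ (j, a))"
  have yS: "y $ (j, a) = pinf $ j * S $ a" for j a
    unfolding S_def by (rule blk_fix(1)[OF Qs lim Vd fx])
  have VS: "V *v S = S" unfolding S_def by (rule blk_fix(2)[OF Qs lim Vd fx])
  show "y = 0"
  proof (cases "S = 0")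
    case True
    have "y $ r = 0" for r using yS[of "fst r" "snd r"] True by simp
    thus ?thesis by (simp add: vec_eq_iff)
  next
    case False
    then obtain t where t: "transpose V *v t = t" and nz: "t \<bullet> ((\<Sum>i\<in>UNIV. pinf $ i *\<^sub>R D i) *v S) \<noteq> 0"
      using test[OF VS] by blast
    have "lift t \<bullet> (blk Q D *v y) = t \<bullet> ((\<Sum>i\<in>UNIV. pinf $ i *\<^sub>R D i) *v S)"
    proof -
      have "lift t \<bullet> (blk Q D *v y) = (\<Sum>i\<in>UNIV. \<Sum>b\<in>UNIV. (\<Sum>a\<in>UNIV. t $ a * D i $ a $ b) * (pinf $ i * S $ b))"
        by (simp add: lift_blk[OF Qs] yS)
      also have "\<dots> = (\<Sum>i\<in>UNIV. \<Sum>b\<in>UNIV. \<Sum>a\<in>UNIV. t $ a * (pinf $ i * D i $ a $ b * S $ b))"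
        by (simp add: sum_distrib_right sum_distrib_left mult.assoc mult.left_commute)
      also have "\<dots> = (\<Sum>a\<in>UNIV. \<Sum>b\<in>UNIV. \<Sum>i\<in>UNIV. t $ a * (pinf $ i * D i $ a $ b * S $ b))"
        by (rule sum3_swap)
      also have "\<dots> = t \<bullet> ((\<Sum>i\<in>UNIV. pinf $ i *\<^sub>R D i) *v S)"
        by (simp add: inner_vec_real matrix_vector_mult_def sum_component sum_distrib_left sum_distrib_right mult.assoc)
      finally show ?thesis .
    qed
    moreover have "lift t \<bullet> ((- blk Q D) *v y) = 0" using H t by blast
    ultimately have "t \<bullet> ((\<Sum>i\<in>UNIV. pinf $ i *\<^sub>R D i) *v S) = 0"
      by (simp add: neg_mv inner_minus_right)
    with nz show ?thesis by simp
  qed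
qed

lemma kron_mv: "(kron A B *v s) $ (x, c) = (\<Sum>y\<in>UNIV. \<Sum>z\<in>UNIV. A $ x $ y * B $ c $ z * s $ (y, z))"
  unfolding kron_def matrix_vector_mult_def
  by (subst sum_UNIV_pair) simp

lemma kron_I_right_mv: "(kron A (mat 1) *v s) $ (x, c) = (\<Sum>y\<in>UNIV. A $ x $ y * s $ (y, c))"
proof -
  have "(kron A (mat 1) *v s) $ (x, c) = (\<Sum>y\<in>UNIV. A $ x $ y * (\<Sum>z\<in>UNIV. (if c = z then 1 else 0) * s $ (y, z)))"
    by (simp add: kron_mv mat_def sum_distrib_left mult.assoc)
  also have "\<dots> = (\<Sum>y\<in>UNIV. A $ x $ y * s $ (y, c))" by (simp only: delta_sum)
  finally show ?thesis .
qed

lemma kron_I_left_mv: "(kron (mat 1) B *v s) $ (x, c) = (\<Sum>z\<in>UNIV. B $ c $ z * s $ (x, z))"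
proof -
  have "(kron (mat 1) B *v s) $ (x, c) = (\<Sum>y\<in>UNIV. (if x = y then 1 else 0) * (\<Sum>z\<in>UNIV. B $ c $ z * s $ (y, z)))"
    by (simp add: kron_mv mat_def sum_distrib_left mult.assoc)
  also have "\<dots> = (\<Sum>z\<in>UNIV. B $ c $ z * s $ (x, z))" by (simp only: delta_sum)
  finally show ?thesis .
qed

lemma ds_col_pos: "doubly_stochastic V \<Longrightarrow> \<exists>c'. V $ c' $ c > 0"
proof (rule ccontr)
  assume V: "doubly_stochastic V" and "\<not> (\<exists>c'. V $ c' $ c > 0)"
  hence "\<And>c'. V $ c' $ c = 0" using ds_nonneg[OF V] by (meson antisym not_le)
  thus False using ds_col[OF V, of c] by simp
qed

lemma sym_commute:
  fixes V :: "real^'x::finite^'x" and s :: "real^('x\<times>'x)"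
  assumes Vd: "doubly_stochastic V" and sym: "\<And>x y. V $ x $ y > 0 \<Longrightarrow> V $ y $ x > 0"
    and fx: "kron V V *v s = s"
  shows "kron V (mat 1) *v s = kron (mat 1) V *v s"
proof -
  define S where "S y z = s $ (y, z)" for y z
  define Y where "Y x c = (\<Sum>z\<in>UNIV. V $ c $ z * S x z)" for x c
  have fxS: "(\<Sum>y\<in>UNIV. V $ x $ y * Y y c) = S x c" for x c
  proof -
    have "S x c = (\<Sum>y\<in>UNIV. \<Sum>z\<in>UNIV. V $ x $ y * V $ c $ z * s $ (y, z))"
      unfolding S_def by (subst fx[symmetric]) (simp only: kron_mv)
    also have "\<dots> = (\<Sum>y\<in>UNIV. V $ x $ y * Y y c)"
      by (simp add: Y_def S_def sum_distrib_left mult.assoc)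
    finally show ?thesis by simp
  qed
  have m1: "V *v (\<chi> y. Y y c) = (\<chi> x. S x c)" for c
    by (simp add: vec_eq_iff matrix_vector_mult_def fxS)
  have m2: "V *v (\<chi> z. S x z) = (\<chi> c. Y x c)" for x
    by (simp add: vec_eq_iff matrix_vector_mult_def Y_def)
  define E1 where "E1 = (\<Sum>c\<in>UNIV. \<Sum>x\<in>UNIV. \<Sum>y\<in>UNIV. V $ x $ y * (Y y c - S x c)\<^sup>2)"
  define E2 where "E2 = (\<Sum>x\<in>UNIV. \<Sum>c\<in>UNIV. \<Sum>z\<in>UNIV. V $ c $ z * (S x z - Y x c)\<^sup>2)"
  have J1: "(\<Sum>c\<in>UNIV. \<Sum>x\<in>UNIV. (S x c)\<^sup>2) + E1 = (\<Sum>c\<in>UNIV. \<Sum>y\<in>UNIV. (Y y c)\<^sup>2)"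
  proof -
    have "(\<Sum>x\<in>UNIV. (S x c)\<^sup>2) + (\<Sum>x\<in>UNIV. \<Sum>y\<in>UNIV. V $ x $ y * (Y y c - S x c)\<^sup>2) = (\<Sum>y\<in>UNIV. (Y y c)\<^sup>2)" for c
      using jensen_identity[OF Vd, of "\<chi> y. Y y c"] by (simp add: m1)
    thus ?thesis unfolding E1_def by (simp add: sum.distrib[symmetric])
  qed
  have J2: "(\<Sum>x\<in>UNIV. \<Sum>c\<in>UNIV. (Y x c)\<^sup>2) + E2 = (\<Sum>x\<in>UNIV. \<Sum>z\<in>UNIV. (S x z)\<^sup>2)"
  proof -
    have "(\<Sum>c\<in>UNIV. (Y x c)\<^sup>2) + (\<Sum>c\<in>UNIV. \<Sum>z\<in>UNIV. V $ c $ z * (S x z - Y x c)\<^sup>2) = (\<Sum>z\<in>UNIV. (S x z)\<^sup>2)" for x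
      using jensen_identity[OF Vd, of "\<chi> z. S x z"] by (simp add: m2)
    thus ?thesis unfolding E2_def by (simp add: sum.distrib[symmetric])
  qed
  have "(\<Sum>c\<in>UNIV. \<Sum>x\<in>UNIV. (S x c)\<^sup>2) = (\<Sum>x\<in>UNIV. \<Sum>c\<in>UNIV. (S x c)\<^sup>2)" by (rule sum.swap)
  moreover have "(\<Sum>c\<in>UNIV. \<Sum>y\<in>UNIV. (Y y c)\<^sup>2) = (\<Sum>x\<in>UNIV. \<Sum>c\<in>UNIV. (Y x c)\<^sup>2)" by (rule sum.swap)
  ultimately have E12: "E1 + E2 = 0" using J1 J2 by linarith
  have t1: "\<And>c x y. 0 \<le> V $ x $ y * (Y y c - S x c)\<^sup>2" using ds_nonneg[OF Vd] by simp
  have t2: "\<And>x c z. 0 \<le> V $ c $ z * (S x z - Y x c)\<^sup>2" using ds_nonneg[OF Vd] by simp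
  have E1n: "0 \<le> E1" unfolding E1_def using t1 by (intro sum_nonneg) auto
  have E2n: "0 \<le> E2" unfolding E2_def using t2 by (intro sum_nonneg) auto
  have E10: "E1 = 0" and E20: "E2 = 0" using E12 E1n E2n by linarith+
  have a: "Y y c = S x c" if "V $ x $ y > 0" for x y c
  proof -
    have "(\<Sum>c\<in>UNIV. \<Sum>x\<in>UNIV. \<Sum>y\<in>UNIV. V $ x $ y * (Y y c - S x c)\<^sup>2) = 0" using E10 by (simp add: E1_def)
    hence "\<forall>c\<in>UNIV. (\<Sum>x\<in>UNIV. \<Sum>y\<in>UNIV. V $ x $ y * (Y y c - S x c)\<^sup>2) = 0"
      using t1 by (subst (asm) sum_nonneg_eq_0_iff) (auto intro!: sum_nonneg)
    hence "\<forall>x\<in>UNIV. (\<Sum>y\<in>UNIV. V $ x $ y * (Y y c - S x c)\<^sup>2) = 0"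
      using t1 by (subst (asm) sum_nonneg_eq_0_iff) (auto intro!: sum_nonneg)
    hence "\<forall>y\<in>UNIV. V $ x $ y * (Y y c - S x c)\<^sup>2 = 0"
      using t1 by (subst (asm) sum_nonneg_eq_0_iff) auto
    hence "V $ x $ y * (Y y c - S x c)\<^sup>2 = 0" by simp
    thus ?thesis using that by simp
  qed
  have b: "S x z = Y x c" if "V $ c $ z > 0" for x z c
  proof -
    have "(\<Sum>x\<in>UNIV. \<Sum>c\<in>UNIV. \<Sum>z\<in>UNIV. V $ c $ z * (S x z - Y x c)\<^sup>2) = 0" using E20 by (simp add: E2_def)
    hence "\<forall>x\<in>UNIV. (\<Sum>c\<in>UNIV. \<Sum>z\<in>UNIV. V $ c $ z * (S x z - Y x c)\<^sup>2) = 0"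
      using t2 by (subst (asm) sum_nonneg_eq_0_iff) (auto intro!: sum_nonneg)
    hence "\<forall>c\<in>UNIV. (\<Sum>z\<in>UNIV. V $ c $ z * (S x z - Y x c)\<^sup>2) = 0"
      using t2 by (subst (asm) sum_nonneg_eq_0_iff) (auto intro!: sum_nonneg)
    hence "\<forall>z\<in>UNIV. V $ c $ z * (S x z - Y x c)\<^sup>2 = 0"
      using t2 by (subst (asm) sum_nonneg_eq_0_iff) auto
    hence "V $ c $ z * (S x z - Y x c)\<^sup>2 = 0" by simp
    thus ?thesis using that by simp
  qed
  have key: "V $ x $ y * S y c = V $ x $ y * Y x c" for x y c
  proof (cases "V $ x $ y > 0")
    case True
    obtain c' where c': "V $ c' $ c > 0" using ds_col_pos[OF Vd] by blast
    have "S y c = Y y c'" by (rule b[OF c'])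
    also have "\<dots> = S x c'" by (rule a[OF True])
    also have "\<dots> = Y x c" by (rule b[OF sym[OF c']])
    finally show ?thesis by simp
  next
    case False
    hence "V $ x $ y = 0" using ds_nonneg[OF Vd, of x y] by simp
    thus ?thesis by simp
  qed
  have "(kron V (mat 1) *v s) $ (x, c) = (kron (mat 1) V *v s) $ (x, c)" for x c
  proof -
    have "(kron V (mat 1) *v s) $ (x, c) = (\<Sum>y\<in>UNIV. V $ x $ y * S y c)"
      by (simp add: kron_I_right_mv S_def)
    also have "\<dots> = (\<Sum>y\<in>UNIV. V $ x $ y * Y x c)" by (simp add: key)
    also have "\<dots> = Y x c" using ds_row[OF Vd, of x] by (simp add: sum_distrib_right[symmetric])
    also have "\<dots> = (kron (mat 1) V *v s) $ (x, c)" by (simp add: kron_I_left_mv Y_def S_def)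
    finally show ?thesis .
  qed
  thus ?thesis by (simp add: vec_eq_iff)
qed

lemma kron_mult: "kron A B ** kron C D = kron (A ** C) (B ** D)"
proof -
  have "(kron A B ** kron C D) $ r $ q = kron (A ** C) (B ** D) $ r $ q" for r q
  proof -
    have "(kron A B ** kron C D) $ r $ q
        = (\<Sum>m\<in>UNIV. \<Sum>n\<in>UNIV. A $ fst r $ m * C $ m $ fst q * (B $ snd r $ n * D $ n $ snd q))"
      unfolding matrix_matrix_mult_def kron_def by (subst sum_UNIV_pair) (simp add: ac_simps)
    also have "\<dots> = kron (A ** C) (B ** D) $ r $ q"
      by (simp add: kron_def matrix_matrix_mult_def sum_product)
    finally show ?thesis .
  qed
  thus ?thesis by (simp add: vec_eq_iff)
qed

lemma kron_ds:
  assumes "doubly_stochastic A" "doubly_stochastic B"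
  shows "doubly_stochastic (kron A B)"
proof -
  have nn: "0 \<le> kron A B $ r $ q" for r q
    using ds_nonneg[OF assms(1)] ds_nonneg[OF assms(2)] by (simp add: kron_def)
  have rs: "(\<Sum>q\<in>UNIV. kron A B $ r $ q) = 1" for r
    by (simp add: kron_def sum_UNIV_pair[where f = "\<lambda>q. A $ fst r $ fst q * B $ snd r $ snd q"]
        sum_distrib_left[symmetric] sum_distrib_right[symmetric] ds_row[OF assms(1)] ds_row[OF assms(2)])
  have cs: "(\<Sum>r\<in>UNIV. kron A B $ r $ q) = 1" for q
    by (simp add: kron_def sum_UNIV_pair[where f = "\<lambda>r. A $ fst r $ fst q * B $ snd r $ snd q"]
        sum_distrib_left[symmetric] sum_distrib_right[symmetric] ds_col[OF assms(1)] ds_col[OF assms(2)])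
  show ?thesis using nn rs cs by (simp add: doubly_stochastic_def)
qed

lemma ds_mat1: "doubly_stochastic (mat 1 :: real^'n::finite^'n)"
  by (auto simp: doubly_stochastic_def mat_def sum.delta)

definition negdef :: "real^'n::finite^'n \<Rightarrow> bool" where
  "negdef N \<longleftrightarrow> (\<forall>x. x \<noteq> 0 \<longrightarrow> x \<bullet> (N *v x) < 0)"

lemma negdef_sum:
  fixes f :: "'m::finite \<Rightarrow> real^'n::finite"
  assumes N: "negdef N" and nz: "\<exists>m. f m \<noteq> 0"
  shows "(\<Sum>m\<in>UNIV. f m \<bullet> (N *v f m)) < 0"
proof -
  obtain m0 where m0: "f m0 \<noteq> 0" using nz by blast
  have le: "f m \<bullet> (N *v f m) \<le> 0" for m
    using N unfolding negdef_def by (metis inner_zero_left less_eq_real_def order_refl)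
  have "(\<Sum>m\<in>UNIV. f m \<bullet> (N *v f m)) = f m0 \<bullet> (N *v f m0) + (\<Sum>m\<in>UNIV - {m0}. f m \<bullet> (N *v f m))"
    by (simp add: sum.remove)
  moreover have "(\<Sum>m\<in>UNIV - {m0}. f m \<bullet> (N *v f m)) \<le> 0" using le by (simp add: sum_nonpos)
  moreover have "f m0 \<bullet> (N *v f m0) < 0" using N m0 unfolding negdef_def by blast
  ultimately show ?thesis by linarith
qed

lemma quad_kron_I_left:
  "x \<bullet> (kron (mat 1) N *v x) = (\<Sum>m\<in>UNIV. (\<chi> a. x $ (m, a)) \<bullet> (N *v (\<chi> a. x $ (m, a))))"
proof -
  have "x \<bullet> (kron (mat 1) N *v x) = (\<Sum>m\<in>UNIV. \<Sum>a\<in>UNIV. x $ (m, a) * (\<Sum>z\<in>UNIV. N $ a $ z * x $ (m, z)))"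
    by (simp add: inner_vec_real kron_I_left_mv sum_UNIV_pair[where f = "\<lambda>r. x $ r * _ r"])
  also have "\<dots> = (\<Sum>m\<in>UNIV. (\<chi> a. x $ (m, a)) \<bullet> (N *v (\<chi> a. x $ (m, a))))"
    by (simp add: inner_vec_real matrix_vector_mult_def)
  finally show ?thesis .
qed

lemma quad_kron_I_right:
  "x \<bullet> (kron N (mat 1) *v x) = (\<Sum>b\<in>UNIV. (\<chi> a. x $ (a, b)) \<bullet> (N *v (\<chi> a. x $ (a, b))))"
proof -
  have "x \<bullet> (kron N (mat 1) *v x) = (\<Sum>a\<in>UNIV. \<Sum>b\<in>UNIV. x $ (a, b) * (\<Sum>y\<in>UNIV. N $ a $ y * x $ (y, b)))"
    by (simp add: inner_vec_real kron_I_right_mv sum_UNIV_pair[where f = "\<lambda>r. x $ r * _ r"])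
  also have "\<dots> = (\<Sum>b\<in>UNIV. \<Sum>a\<in>UNIV. x $ (a, b) * (\<Sum>y\<in>UNIV. N $ a $ y * x $ (y, b)))"
    by (rule sum.swap)
  also have "\<dots> = (\<Sum>b\<in>UNIV. (\<chi> a. x $ (a, b)) \<bullet> (N *v (\<chi> a. x $ (a, b))))"
    by (simp add: inner_vec_real matrix_vector_mult_def)
  finally show ?thesis .
qed

lemma negdef_kron_I_left: "negdef N \<Longrightarrow> negdef (kron (mat 1 :: real^'m::finite^'m) N)"
proof -
  assume N: "negdef N"
  show ?thesis unfolding negdef_def
  proof (intro allI impI)
    fix x :: "real^('m \<times> 'a)" assume "x \<noteq> 0"
    then obtain r where "x $ r \<noteq> 0" by (auto simp: vec_eq_iff)
    hence "\<exists>m. (\<chi> a. x $ (m, a)) \<noteq> 0"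
      by (intro exI[of _ "fst r"]) (auto simp: vec_eq_iff intro!: exI[of _ "snd r"])
    thus "x \<bullet> (kron (mat 1) N *v x) < 0"
      unfolding quad_kron_I_left by (rule negdef_sum[OF N])
  qed
qed

lemma negdef_kron_I_right: "negdef N \<Longrightarrow> negdef (kron N (mat 1 :: real^'m::finite^'m))"
proof -
  assume N: "negdef N"
  show ?thesis unfolding negdef_def
  proof (intro allI impI)
    fix x :: "real^('a \<times> 'm)" assume "x \<noteq> 0"
    then obtain r where "x $ r \<noteq> 0" by (auto simp: vec_eq_iff)
    hence "\<exists>b. (\<chi> a. x $ (a, b)) \<noteq> 0"
      by (intro exI[of _ "snd r"]) (auto simp: vec_eq_iff intro!: exI[of _ "fst r"])
    thus "x \<bullet> (kron N (mat 1) *v x) < 0"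
      unfolding quad_kron_I_right by (rule negdef_sum[OF N])
  qed
qed


lemma test11:
  fixes V :: "real^'x::finite^'x" and N :: "real^'x^'x"
  assumes Vd: "doubly_stochastic V" and N: "negdef N"
  shows "\<And>s. V *v s = s \<Longrightarrow> s \<noteq> 0 \<Longrightarrow> \<exists>t. transpose V *v t = t \<and> t \<bullet> (N *v s) \<noteq> 0"
proof -
  fix s assume "V *v s = s" "s \<noteq> 0"
  thus "\<exists>t. transpose V *v t = t \<and> t \<bullet> (N *v s) \<noteq> 0"
    using ds_fix_transpose[OF Vd] N unfolding negdef_def by (metis less_irrefl)
qed

lemma test22:
  fixes V :: "real^'x::finite^'x" and N :: "real^'x^'x"
  assumes Vd: "doubly_stochastic V" and sym: "\<And>x y. V $ x $ y > 0 \<Longrightarrow> V $ y $ x > 0"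
    and N: "negdef N"
  shows "\<And>s. kron V V *v s = s \<Longrightarrow> s \<noteq> 0 \<Longrightarrow>
          \<exists>t. transpose (kron V V) *v t = t \<and> t \<bullet> ((kron N V + kron V N) *v s) \<noteq> 0"
proof -
  fix s :: "real^('x\<times>'x)" assume fx: "kron V V *v s = s" and nz: "s \<noteq> 0"
  define u where "u = kron V (mat 1) *v s"
  have u2: "u = kron (mat 1) V *v s" unfolding u_def by (rule sym_commute[OF Vd sym fx])
  have TT: "kron V V ** kron V (mat 1) = kron V (mat 1) ** kron V V"
    by (simp add: kron_mult)
  have Tu: "kron V V *v u = u"
    unfolding u_def by (simp add: matrix_vector_mul_assoc TT) (simp add: matrix_vector_mul_assoc[symmetric] fx)
  have TTd: "doubly_stochastic (kron V V)" by (rule kron_ds[OF Vd Vd])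
  have tu: "transpose (kron V V) *v u = u" by (rule ds_fix_transpose[OF TTd Tu])
  have d1: "kron N V *v s = kron N (mat 1) *v u"
  proof -
    have "kron N V = kron N (mat 1) ** kron (mat 1) V" by (simp add: kron_mult)
    thus ?thesis by (simp add: u2 matrix_vector_mul_assoc)
  qed
  have d2: "kron V N *v s = kron (mat 1) N *v u"
  proof -
    have "kron V N = kron (mat 1) N ** kron V (mat 1)" by (simp add: kron_mult)
    thus ?thesis by (simp add: u_def matrix_vector_mul_assoc)
  qed
  have unz: "u \<noteq> 0"
  proof
    assume "u = 0"
    have "kron V V = kron (mat 1) V ** kron V (mat 1)" by (simp add: kron_mult)
    hence "s = kron (mat 1) V *v u" using fx by (simp add: u_def matrix_vector_mul_assoc)
    with \<open>u = 0\<close> nz show False by simp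
  qed
  have "u \<bullet> ((kron N V + kron V N) *v s) = u \<bullet> (kron N (mat 1) *v u) + u \<bullet> (kron (mat 1) N *v u)"
    by (simp add: matrix_vector_mult_add_rdistrib inner_add_right d1 d2)
  also have "\<dots> < 0"
    using negdef_kron_I_right[OF N] negdef_kron_I_left[OF N] unz unfolding negdef_def
    by (meson add_neg_neg)
  finally show "\<exists>t. transpose (kron V V) *v t = t \<and> t \<bullet> ((kron N V + kron V N) *v s) \<noteq> 0"
    using tu by (intro exI[of _ u]) auto
qed

lemma pairP_stochastic:
  assumes P: "stochastic_matrix P"
  shows "stochastic_matrix (pairP P)"
proof -
  have nn: "0 \<le> pairP P $ i $ j" for i j using st_nonneg[OF P] by (simp add: pairP_def)
  have rs: "(\<Sum>j\<in>UNIV. pairP P $ i $ j) = 1" for i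
  proof -
    have "(\<Sum>j\<in>UNIV. pairP P $ i $ j) = (\<Sum>s\<in>UNIV. \<Sum>s'\<in>UNIV. if snd i = s then P $ s $ s' else 0)"
      unfolding pairP_def by (subst sum_UNIV_pair) (simp cong: if_cong)
    also have "\<dots> = (\<Sum>s'\<in>UNIV. \<Sum>s\<in>UNIV. if snd i = s then P $ s $ s' else 0)"
      by (rule sum.swap)
    also have "\<dots> = (\<Sum>s'\<in>UNIV. P $ snd i $ s')"
      by (simp only: sum.delta' finite UNIV_I if_True)
    also have "\<dots> = 1" using st_row[OF P] by simp
    finally show ?thesis .
  qed
  show ?thesis using nn rs by (simp add: stochastic_matrix_def)
qed

lemma pairP_row_weighted:
  assumes P: "stochastic_matrix P"
  shows "(\<Sum>j\<in>UNIV. pairP P $ i $ j * g (fst j)) = g (snd i)"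
proof -
  have "(\<Sum>j\<in>UNIV. pairP P $ i $ j * g (fst j)) = (\<Sum>s\<in>UNIV. \<Sum>s'\<in>UNIV. (if snd i = s then P $ s $ s' * g s else 0))"
    unfolding pairP_def by (subst sum_UNIV_pair) (simp add: if_distrib[where f = "\<lambda>x. x * _"] cong: if_cong)
  also have "\<dots> = (\<Sum>s'\<in>UNIV. \<Sum>s\<in>UNIV. if snd i = s then P $ s $ s' * g s else 0)"
    by (rule sum.swap)
  also have "\<dots> = (\<Sum>s'\<in>UNIV. P $ snd i $ s' * g (snd i))"
    by (simp only: sum.delta' finite UNIV_I if_True)
  also have "\<dots> = g (snd i)" using st_row[OF P] by (simp add: sum_distrib_right[symmetric])
  finally show ?thesis .
qed


lemma marg:
  assumes P: "stochastic_matrix P" and lim: "limiting_distribution (pairP P) pinf"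
  shows "(\<Sum>j\<in>UNIV. pinf $ j * g (fst j)) = (\<Sum>i\<in>UNIV. pinf $ i * g (snd i))"
proof -
  have Qs: "stochastic_matrix (pairP P)" by (rule pairP_stochastic[OF P])
  have "(\<Sum>j\<in>UNIV. pinf $ j * g (fst j)) = (\<Sum>j\<in>UNIV. (\<Sum>i\<in>UNIV. pinf $ i * pairP P $ i $ j) * g (fst j))"
    by (simp only: lim_stat[OF Qs lim])
  also have "\<dots> = (\<Sum>i\<in>UNIV. pinf $ i * (\<Sum>j\<in>UNIV. pairP P $ i $ j * g (fst j)))"
    by (simp add: sum_distrib_right sum_distrib_left mult.assoc) (rule sum.swap)
  also have "\<dots> = (\<Sum>i\<in>UNIV. pinf $ i * g (snd i))"
    by (simp only: pairP_row_weighted[OF P])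
  finally show ?thesis .
qed

lemma pinf_factor:
  assumes P: "stochastic_matrix P" and lim: "limiting_distribution (pairP P) pinf"
  shows "pinf $ (s, s') = (\<Sum>u\<in>UNIV. pinf $ (u, s)) * P $ s $ s'"
proof -
  have Qs: "stochastic_matrix (pairP P)" by (rule pairP_stochastic[OF P])
  have "pinf $ (s, s') = (\<Sum>i\<in>UNIV. pinf $ i * pairP P $ i $ (s, s'))"
    by (simp only: lim_stat[OF Qs lim])
  also have "\<dots> = (\<Sum>u\<in>UNIV. \<Sum>v\<in>UNIV. if v = s then pinf $ (u, v) * P $ s $ s' else 0)"
    by (subst sum_UNIV_pair) (simp add: pairP_def if_distrib[where f = "\<lambda>x. _ * x"] cong: if_cong)
  also have "\<dots> = (\<Sum>u\<in>UNIV. pinf $ (u, s) * P $ s $ s')"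
    by (simp only: sum.delta finite UNIV_I if_True)
  also have "\<dots> = (\<Sum>u\<in>UNIV. pinf $ (u, s)) * P $ s $ s'" by (simp add: sum_distrib_right)
  finally show ?thesis .
qed

definition mu_of :: "real^('s::finite\<times>'s) \<Rightarrow> 's \<Rightarrow> real" where
  "mu_of pinf s = (\<Sum>s'\<in>UNIV. pinf $ (s, s'))"

lemma pi_props:
  assumes P: "stochastic_matrix P" and lim: "limiting_distribution (pairP P) pinf"
  shows "\<And>s. 0 \<le> mu_of pinf s" and "(\<Sum>s\<in>UNIV. mu_of pinf s) = 1"
    and "\<And>s'. (\<Sum>s\<in>UNIV. mu_of pinf s * P $ s $ s') = mu_of pinf s'"
    and "\<And>g. (\<Sum>j\<in>UNIV. pinf $ j * g (fst j)) = (\<Sum>s\<in>UNIV. mu_of pinf s * g s)"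
proof -
  have Qs: "stochastic_matrix (pairP P)" by (rule pairP_stochastic[OF P])
  show "0 \<le> mu_of pinf s" for s using lim_nonneg[OF Qs lim] by (simp add: mu_of_def sum_nonneg)
  show G: "(\<Sum>j\<in>UNIV. pinf $ j * g (fst j)) = (\<Sum>s\<in>UNIV. mu_of pinf s * g s)" for g
    by (subst sum_UNIV_pair) (simp add: mu_of_def sum_distrib_right)
  show "(\<Sum>s\<in>UNIV. mu_of pinf s) = 1"
    using lim_sum[OF Qs lim] unfolding mu_of_def by (simp add: sum_UNIV_pair[symmetric])
  have rho: "mu_of pinf s = (\<Sum>u\<in>UNIV. pinf $ (u, s))" for s
  proof -
    have "mu_of pinf s = (\<Sum>s'\<in>UNIV. (\<Sum>u\<in>UNIV. pinf $ (u, s)) * P $ s $ s')"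
      unfolding mu_of_def by (rule sum.cong[OF refl]) (rule pinf_factor[OF P lim])
    also have "\<dots> = (\<Sum>u\<in>UNIV. pinf $ (u, s))" using st_row[OF P] by (simp add: sum_distrib_left[symmetric])
    finally show ?thesis .
  qed
  show "(\<Sum>s\<in>UNIV. mu_of pinf s * P $ s $ s') = mu_of pinf s'" for s'
  proof -
    have "(\<Sum>s\<in>UNIV. mu_of pinf s * P $ s $ s') = (\<Sum>s\<in>UNIV. pinf $ (s, s'))"
      by (rule sum.cong[OF refl]) (simp only: rho pinf_factor[OF P lim, of _ s'])
    also have "\<dots> = mu_of pinf s'" by (simp add: rho)
    finally show ?thesis .
  qed
qed


lemma mu_pos:
  assumes P: "stochastic_matrix P" and irr: "irreducible_chain P" and lim: "limiting_distribution (pairP P) pinf"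
  shows "0 < mu_of pinf s"
proof -
  note mp = pi_props[OF P lim]
  have statk: "(\<Sum>u\<in>UNIV. mu_of pinf u * mpow P k $ u $ s') = mu_of pinf s'" for k s'
  proof (induction k arbitrary: s')
    case 0 show ?case by (simp add: mat_def if_distrib[where f = "\<lambda>x. _ * x"] cong: if_cong)
  next
    case (Suc k)
    have "(\<Sum>u\<in>UNIV. mu_of pinf u * mpow P (Suc k) $ u $ s')
        = (\<Sum>u\<in>UNIV. \<Sum>w\<in>UNIV. mu_of pinf u * P $ u $ w * mpow P k $ w $ s')"
      by (simp add: matrix_matrix_mult_def sum_distrib_left mult.assoc)
    also have "\<dots> = (\<Sum>w\<in>UNIV. (\<Sum>u\<in>UNIV. mu_of pinf u * P $ u $ w) * mpow P k $ w $ s')"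
      by (subst sum.swap) (simp add: sum_distrib_right)
    also have "\<dots> = mu_of pinf s'" by (simp add: mp(3) Suc.IH)
    finally show ?case .
  qed
  obtain u0 where u0: "mu_of pinf u0 > 0"
  proof (rule ccontr)
    assume "\<not> thesis"
    hence "\<And>u. mu_of pinf u \<le> 0" using that by (meson not_le)
    hence "\<And>u. mu_of pinf u = 0" using mp(1) by (meson antisym)
    thus False using mp(2) by simp
  qed
  obtain k where k: "mpow P k $ u0 $ s > 0" using irr unfolding irreducible_chain_def by blast
  have nn: "0 \<le> mu_of pinf u * mpow P k $ u $ s" for u
    using mp(1) st_nonneg[OF mpow_stochastic[OF P]] by (simp add: mult_nonneg_nonneg)
  have "0 < mu_of pinf u0 * mpow P k $ u0 $ s" using u0 k by simp
  also have "\<dots> \<le> (\<Sum>u\<in>UNIV. mu_of pinf u * mpow P k $ u $ s)"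
    by (rule member_le_sum) (use nn in auto)
  also have "\<dots> = mu_of pinf s" by (rule statk)
  finally show ?thesis .
qed

lemma Amat_mv:
  "(Amat phi \<gamma> i *v x) $ a = phi (fst i) $ a * (\<gamma> * (x \<bullet> phi (snd i)) - x \<bullet> phi (fst i))"
  by (simp add: Amat_def inner_vec_real matrix_vector_mult_def right_diff_distrib sum_distrib_left
      sum_subtractf mult.assoc mult.left_commute mult.commute)

lemma quad_Amat:
  "x \<bullet> (Amat phi \<gamma> i *v x) = (x \<bullet> phi (fst i)) * (\<gamma> * (x \<bullet> phi (snd i)) - x \<bullet> phi (fst i))"
proof -
  define c where "c = \<gamma> * (x \<bullet> phi (snd i)) - x \<bullet> phi (fst i)"
  have "x \<bullet> (Amat phi \<gamma> i *v x) = (\<Sum>a\<in>UNIV. x $ a * (phi (fst i) $ a * c))"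
    unfolding inner_vec_real[of x "Amat phi \<gamma> i *v x"] by (simp only: Amat_mv c_def)
  also have "\<dots> = (\<Sum>a\<in>UNIV. x $ a * phi (fst i) $ a) * c"
    by (simp add: sum_distrib_right mult.assoc)
  also have "\<dots> = (x \<bullet> phi (fst i)) * c" by (simp add: inner_vec_real)
  finally show ?thesis by (simp add: c_def)
qed

lemma quad_Abar:
  "x \<bullet> (Abar phi \<gamma> pinf *v x) = (\<Sum>i\<in>UNIV. pinf $ i * (x \<bullet> (Amat phi \<gamma> i *v x)))"
proof -
  have "x \<bullet> (Abar phi \<gamma> pinf *v x) = (\<Sum>a\<in>UNIV. \<Sum>b\<in>UNIV. \<Sum>i\<in>UNIV. pinf $ i * (x $ a * (Amat phi \<gamma> i $ a $ b * x $ b)))"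
    by (simp add: Abar_def inner_vec_real matrix_vector_mult_def sum_component sum_distrib_left sum_distrib_right mult.assoc mult.left_commute)
  also have "\<dots> = (\<Sum>i\<in>UNIV. \<Sum>b\<in>UNIV. \<Sum>a\<in>UNIV. pinf $ i * (x $ a * (Amat phi \<gamma> i $ a $ b * x $ b)))"
    by (rule sum3_swap[symmetric])
  also have "\<dots> = (\<Sum>i\<in>UNIV. pinf $ i * (x \<bullet> (Amat phi \<gamma> i *v x)))"
    by (simp add: inner_vec_real matrix_vector_mult_def sum_distrib_left) (rule sum.cong[OF refl], rule sum.swap)
  finally show ?thesis .
qed

lemma Abar_negdef:
  fixes P :: "real^'s::finite^'s" and phi :: "'s \<Rightarrow> real^'p::finite"
  assumes P: "stochastic_matrix P" and irr: "irreducible_chain P" and lim: "limiting_distribution (pairP P) pinf"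
    and li: "lin_indep_features phi" and g0: "0 < \<gamma>" and g1: "\<gamma> < 1"
  shows "negdef (Abar phi \<gamma> pinf)"
  unfolding negdef_def
proof (intro allI impI)
  fix x :: "real^'p" assume x: "x \<noteq> 0"
  note mp = pi_props[OF P lim]
  have Qs: "stochastic_matrix (pairP P)" by (rule pairP_stochastic[OF P])
  define f where "f s = x \<bullet> phi s" for s
  define A where "A = (\<Sum>i\<in>UNIV. pinf $ i * (f (fst i))\<^sup>2)"
  have trm: "pinf $ i * (f (fst i) * (\<gamma> * f (snd i) - f (fst i)))
      \<le> pinf $ i * (\<gamma> / 2 * (f (fst i))\<^sup>2 + \<gamma> / 2 * (f (snd i))\<^sup>2 - (f (fst i))\<^sup>2)" for i
  proof -
    have "f (fst i) * f (snd i) \<le> ((f (fst i))\<^sup>2 + (f (snd i))\<^sup>2) / 2"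
      using sum_squares_bound[of "f (fst i)" "f (snd i)"] by simp
    hence "\<gamma> * (f (fst i) * f (snd i)) \<le> \<gamma> * (((f (fst i))\<^sup>2 + (f (snd i))\<^sup>2) / 2)"
      using g0 by (simp add: mult_left_mono)
    hence "f (fst i) * (\<gamma> * f (snd i) - f (fst i)) \<le> \<gamma> / 2 * (f (fst i))\<^sup>2 + \<gamma> / 2 * (f (snd i))\<^sup>2 - (f (fst i))\<^sup>2"
      by (simp add: algebra_simps power2_eq_square)
    thus ?thesis using lim_nonneg[OF Qs lim, of i] by (simp add: mult_left_mono)
  qed
  have B: "(\<Sum>i\<in>UNIV. pinf $ i * (f (snd i))\<^sup>2) = A"
    unfolding A_def using marg[OF P lim, of "\<lambda>s. (f s)\<^sup>2"] by simp
  have "x \<bullet> (Abar phi \<gamma> pinf *v x) = (\<Sum>i\<in>UNIV. pinf $ i * (f (fst i) * (\<gamma> * f (snd i) - f (fst i))))"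
    by (simp add: quad_Abar quad_Amat f_def)
  also have "\<dots> \<le> (\<Sum>i\<in>UNIV. pinf $ i * (\<gamma> / 2 * (f (fst i))\<^sup>2 + \<gamma> / 2 * (f (snd i))\<^sup>2 - (f (fst i))\<^sup>2))"
    by (rule sum_mono) (rule trm)
  also have "\<dots> = \<gamma> / 2 * A + \<gamma> / 2 * (\<Sum>i\<in>UNIV. pinf $ i * (f (snd i))\<^sup>2) - A"
    unfolding A_def by (simp add: algebra_simps sum.distrib sum_subtractf sum_distrib_left)
  also have "\<dots> = (\<gamma> - 1) * A" by (simp add: B algebra_simps)
  finally have le: "x \<bullet> (Abar phi \<gamma> pinf *v x) \<le> (\<gamma> - 1) * A" .
  obtain s0 where s0: "f s0 \<noteq> 0"
  proof (rule ccontr)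
    assume "\<not> thesis"
    hence "\<forall>s. f s = 0" using that by blast
    hence "\<forall>s. (\<Sum>k\<in>UNIV. x $ k * phi s $ k) = 0" by (simp add: f_def inner_vec_real)
    hence "x = 0" using li unfolding lin_indep_features_def by blast
    with x show False by simp
  qed
  have "A = (\<Sum>s\<in>UNIV. mu_of pinf s * (f s)\<^sup>2)" unfolding A_def by (rule mp(4))
  also have "\<dots> > 0"
    by (rule sum_pos2[where i = s0]) (use mu_pos[OF P irr lim] mp(1) s0 in auto)
  finally have "A > 0" .
  hence "(\<gamma> - 1) * A < 0" using g1 by (simp add: mult_neg_pos)
  with le show "x \<bullet> (Abar phi \<gamma> pinf *v x) < 0" by linarith
qed

lemma fix_const:
  fixes W :: "real^'m::finite^'m"
  assumes Wd: "doubly_stochastic W" and con: "connected_undirected_pattern W"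
    and y: "W *v y = y"
  shows "y $ i = y $ j"
proof -
  have E0: "(\<Sum>x\<in>UNIV. \<Sum>z\<in>UNIV. W $ x $ z * (y $ z - (W *v y) $ x)\<^sup>2) = 0"
    using ds_contract_sq[OF Wd, of y] y by simp
  have tn: "\<And>x z. 0 \<le> W $ x $ z * (y $ z - (W *v y) $ x)\<^sup>2" using ds_nonneg[OF Wd] by simp
  have edge: "y $ x = y $ z" if "W $ x $ z \<noteq> 0" for x z
  proof -
    have "\<forall>x\<in>UNIV. (\<Sum>z\<in>UNIV. W $ x $ z * (y $ z - (W *v y) $ x)\<^sup>2) = 0"
      using E0 tn by (subst (asm) sum_nonneg_eq_0_iff) (auto intro!: sum_nonneg)
    hence "\<forall>z\<in>UNIV. W $ x $ z * (y $ z - (W *v y) $ x)\<^sup>2 = 0"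
      using tn by (subst (asm) sum_nonneg_eq_0_iff) auto
    hence "W $ x $ z * (y $ z - (W *v y) $ x)\<^sup>2 = 0" by simp
    thus ?thesis using that y by simp
  qed
  have "(i, j) \<in> (pattern_edges W)\<^sup>*" using con unfolding connected_undirected_pattern_def by blast
  thus ?thesis
  proof (induction rule: rtrancl_induct)
    case base show ?case by simp
  next
    case (step b c)
    hence "W $ b $ c \<noteq> 0" by (simp add: pattern_edges_def)
    thus ?case using step.IH edge[of b c] by simp
  qed
qed

lemma transpose_kron: "transpose (kron A B) = kron (transpose A) (transpose B)"
  by (simp add: vec_eq_iff transpose_def kron_def)

lemma fixT_const:
  fixes W :: "real^'m::finite^'m" and t :: "real^('m\<times>'p::finite)"
  assumes Wd: "doubly_stochastic W" and con: "connected_undirected_pattern W"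
    and t: "transpose (kron W (mat 1 :: real^'p^'p)) *v t = t"
  shows "t $ (m, a) = t $ (m', a)"
proof -
  have c: "transpose W *v (\<chi> m. t $ (m, a)) = (\<chi> m. t $ (m, a))"
  proof -
    have "(transpose W *v (\<chi> m. t $ (m, a))) $ m = t $ (m, a)" for m
    proof -
      have "t $ (m, a) = (transpose (kron W (mat 1 :: real^'p^'p)) *v t) $ (m, a)" using t by simp
      also have "\<dots> = (\<Sum>y\<in>UNIV. transpose W $ m $ y * t $ (y, a))"
        by (simp add: transpose_kron transpose_mat kron_I_right_mv)
      finally show ?thesis by (simp add: matrix_vector_mult_def)
    qed
    thus ?thesis by (simp add: vec_eq_iff)
  qed
  have "W *v (\<chi> m. t $ (m, a)) = (\<chi> m. t $ (m, a))"
    using ds_fix_transpose[OF ds_transpose[OF Wd] c] by simp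
  from fix_const[OF Wd con this, of m m'] show ?thesis by simp
qed


definition gvec1 :: "('m::finite \<Rightarrow> 's::finite \<Rightarrow> 's \<Rightarrow> real) \<Rightarrow> ('s \<Rightarrow> real^'p::finite) \<Rightarrow> real \<Rightarrow> real^'p \<Rightarrow> 's \<times> 's \<Rightarrow> real^('m\<times>'p)" where
  "gvec1 R phi \<gamma> \<theta> i = vecm (Bmat R phi i + Amat phi \<gamma> i ** Theta \<theta>)"

lemma Gvec_eq: "Gvec R phi \<gamma> \<theta> \<alpha> i = \<alpha> *\<^sub>R gvec1 R phi \<gamma> \<theta> i"
  by (simp add: Gvec_def gvec1_def)

definition u1 :: "real^('s::finite)^'s \<Rightarrow> real^('s\<times>'s) \<Rightarrow> ('s \<Rightarrow> real^('p::finite)) \<Rightarrow> real \<Rightarrow> (('m::finite) \<Rightarrow> 's \<Rightarrow> 's \<Rightarrow> real)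
       \<Rightarrow> real^'p \<Rightarrow> real^(('s\<times>'s)\<times>('m\<times>'p))" where
  "u1 P pinf phi \<gamma> R \<theta> = (\<chi> r. \<Sum>i\<in>UNIV. pairP P $ i $ fst r * pinf $ i * gvec1 R phi \<gamma> \<theta> i $ snd r)"

lemma uq_eq: "uq P pinf phi \<gamma> R \<theta> \<alpha> = \<alpha> *\<^sub>R u1 P pinf phi \<gamma> R \<theta>"
  by (simp add: vec_eq_iff uq_def u1_def Gvec_eq sum_distrib_left mult.left_commute)

lemma gvec1_comp: "gvec1 R phi \<gamma> \<theta> i $ (m, a) = bvec R phi m i $ a + (Amat phi \<gamma> i *v \<theta>) $ a"
  by (simp add: gvec1_def vecm_def Bmat_def Theta_def matrix_matrix_mult_def matrix_vector_mult_def)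

lemma key_b:
  fixes R :: "'m::finite \<Rightarrow> 's::finite \<Rightarrow> 's \<Rightarrow> real" and phi :: "'s \<Rightarrow> real^'p::finite"
  shows "(\<Sum>i\<in>UNIV. pinf $ i * (\<Sum>m\<in>UNIV. gvec1 R phi \<gamma> \<theta> i $ (m, a)))
       = real CARD('m) * (Abar phi \<gamma> pinf *v \<theta> + bbar R phi pinf) $ a"
proof -
  have A: "(Abar phi \<gamma> pinf *v \<theta>) $ a = (\<Sum>i\<in>UNIV. pinf $ i * (Amat phi \<gamma> i *v \<theta>) $ a)"
    by (simp add: Abar_def matrix_vector_mult_def sum_component sum_distrib_left sum_distrib_right mult.assoc)
       (rule sum.swap)
  have B: "real CARD('m) * bbar R phi pinf $ a = (\<Sum>m\<in>UNIV. \<Sum>i\<in>UNIV. pinf $ i * bvec R phi m i $ a)"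
    by (simp add: bbar_def sum_component)
  have "(\<Sum>i\<in>UNIV. pinf $ i * (\<Sum>m\<in>UNIV. gvec1 R phi \<gamma> \<theta> i $ (m, a)))
      = (\<Sum>i\<in>UNIV. pinf $ i * (\<Sum>m\<in>UNIV. bvec R phi m i $ a) + real CARD('m) * (pinf $ i * (Amat phi \<gamma> i *v \<theta>) $ a))"
    by (simp add: gvec1_comp sum.distrib algebra_simps)
  also have "\<dots> = (\<Sum>m\<in>UNIV. \<Sum>i\<in>UNIV. pinf $ i * bvec R phi m i $ a) + real CARD('m) * (\<Sum>i\<in>UNIV. pinf $ i * (Amat phi \<gamma> i *v \<theta>) $ a)"
    by (simp add: sum.distrib sum_distrib_left) (rule sum.swap)
  also have "\<dots> = real CARD('m) * (Abar phi \<gamma> pinf *v \<theta> + bbar R phi pinf) $ a"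
    by (simp add: A B[symmetric] algebra_simps)
  finally show ?thesis .
qed

lemma u1_cond:
  fixes P :: "real^'s::finite^'s" and phi :: "'s \<Rightarrow> real^'p::finite" and W :: "real^'m::finite^'m"
    and R :: "'m \<Rightarrow> 's \<Rightarrow> 's \<Rightarrow> real"
  assumes P: "stochastic_matrix P" and Wd: "doubly_stochastic W" and con: "connected_undirected_pattern W"
    and eq: "Abar phi \<gamma> pinf *v \<theta> + bbar R phi pinf = 0"
    and t: "transpose (kron W (mat 1 :: real^'p^'p)) *v t = t"
  shows "(lift t :: real^(('s\<times>'s)\<times>('m\<times>'p))) \<bullet> u1 P pinf phi \<gamma> R \<theta> = 0"
proof -
  have Qs: "stochastic_matrix (pairP P)" by (rule pairP_stochastic[OF P])
  define \<tau> where "\<tau> a = t $ (undefined, a)" for a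
  have tt: "t $ (m, a) = \<tau> a" for m a unfolding \<tau>_def by (rule fixT_const[OF Wd con t])
  let ?g = "gvec1 R phi \<gamma> \<theta>"
  have "(lift t :: real^(('s\<times>'s)\<times>('m\<times>'p))) \<bullet> u1 P pinf phi \<gamma> R \<theta>
      = (\<Sum>j\<in>UNIV. \<Sum>x\<in>UNIV. \<Sum>i\<in>UNIV. pairP P $ i $ j * (t $ x * (pinf $ i * ?g i $ x)))"
    by (simp add: inner_lift u1_def sum_distrib_left ac_simps)
  also have "\<dots> = (\<Sum>i\<in>UNIV. \<Sum>x\<in>UNIV. \<Sum>j\<in>UNIV. pairP P $ i $ j * (t $ x * (pinf $ i * ?g i $ x)))"
    by (rule sum3_swap)
  also have "\<dots> = (\<Sum>i\<in>UNIV. \<Sum>x\<in>UNIV. t $ x * (pinf $ i * ?g i $ x))"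
    using st_row[OF Qs] by (simp add: sum_distrib_right[symmetric])
  also have "\<dots> = (\<Sum>i\<in>UNIV. \<Sum>m\<in>UNIV. \<Sum>a\<in>UNIV. \<tau> a * (pinf $ i * ?g i $ (m, a)))"
    by (subst sum_UNIV_pair) (simp add: tt)
  also have "\<dots> = (\<Sum>a\<in>UNIV. \<Sum>m\<in>UNIV. \<Sum>i\<in>UNIV. \<tau> a * (pinf $ i * ?g i $ (m, a)))"
    by (rule sum3_swap)
  also have "\<dots> = (\<Sum>a\<in>UNIV. \<tau> a * (\<Sum>i\<in>UNIV. pinf $ i * (\<Sum>m\<in>UNIV. ?g i $ (m, a))))"
    by (simp add: sum_distrib_left) (rule sum.cong[OF refl], rule sum.swap)
  also have "\<dots> = 0" by (simp add: key_b eq)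
  finally show ?thesis .
qed

lemma matrix_inv_right':
  assumes "invertible (A::real^'n::finite^'n)"
  shows "A ** matrix_inv A = mat 1"
proof -
  have "\<exists>A'. A ** A' = mat 1 \<and> A' ** A = mat 1" using assms by (simp add: invertible_def)
  hence "A ** matrix_inv A = mat 1 \<and> matrix_inv A ** A = mat 1"
    unfolding matrix_inv_def by (rule someI_ex)
  thus ?thesis by simp
qed

lemma inv_apply: "invertible (A::real^'n::finite^'n) \<Longrightarrow> A *v (matrix_inv A *v v) = v"
  by (simp add: matrix_vector_mul_assoc matrix_inv_right')

lemma lower_invertible:
  fixes M :: "real^'n::finite^'n"
  assumes "0 < c" "0 < a" "\<And>x. c * a * norm x \<le> norm (M *v x)"
  shows "invertible M"
proof -
  have "\<forall>x. M *v x = 0 \<longrightarrow> x = 0"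
  proof (intro allI impI)
    fix x assume "M *v x = 0"
    hence "c * a * norm x \<le> 0" using assms(3)[of x] by simp
    hence "norm x \<le> 0" using assms(1,2)
      by (metis mult_le_0_iff mult_pos_pos not_le norm_ge_zero order.strict_iff_not)
    thus "x = 0" by simp
  qed
  thus ?thesis using matrix_left_invertible_ker invertible_left_inverse by blast
qed

lemma mv_lin3: "(A + c *\<^sub>R B + d *\<^sub>R C) *v x = A *v x + c *\<^sub>R (B *v x) + d *\<^sub>R (C *v (x::real^'n::finite))"
  by (simp add: matrix_vector_mult_add_rdistrib scaleR_matrix_vector_assoc)

lemma blk_lin3: "blk Q (\<lambda>i. X i + a *\<^sub>R Y i + b *\<^sub>R Z i) = blk Q X + a *\<^sub>R blk Q Y + b *\<^sub>R blk Q Z"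
  by (simp add: vec_eq_iff blk_def algebra_simps)

lemma H11_expand:
  "mat 1 - H11 P phi \<gamma> W \<alpha> = (mat 1 - blk (pairP P) (\<lambda>_. kron W (mat 1)))
      + \<alpha> *\<^sub>R (- blk (pairP P) (\<lambda>i. kron (mat 1) (Amat phi \<gamma> i))) + \<alpha>\<^sup>2 *\<^sub>R 0"
proof -
  have "H11 P phi \<gamma> W \<alpha> = blk (pairP P) (\<lambda>i. kron W (mat 1) + \<alpha> *\<^sub>R kron (mat 1) (Amat phi \<gamma> i) + \<alpha>\<^sup>2 *\<^sub>R 0)"
    by (simp add: H11_def blk_def Hmat_def algebra_simps)
  also have "\<dots> = blk (pairP P) (\<lambda>_. kron W (mat 1)) + \<alpha> *\<^sub>R blk (pairP P) (\<lambda>i. kron (mat 1) (Amat phi \<gamma> i)) + \<alpha>\<^sup>2 *\<^sub>R blk (pairP P) (\<lambda>_. 0)"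
    by (rule blk_lin3)
  finally show ?thesis by (simp add: blk_def vec_eq_iff)
qed

lemma H22_expand:
  fixes W :: "real^'m::finite^'m" and phi :: "'s::finite \<Rightarrow> real^'p::finite" and \<gamma> :: real
  defines "V1 \<equiv> kron W (mat 1 :: real^'p^'p)"
  defines "D1 \<equiv> \<lambda>i. kron (mat 1 :: real^'m^'m) (Amat phi \<gamma> i)"
  shows "mat 1 - H22 P phi \<gamma> W \<alpha> = (mat 1 - blk (pairP P) (\<lambda>_. kron V1 V1))
      + \<alpha> *\<^sub>R (- blk (pairP P) (\<lambda>i. kron (D1 i) V1 + kron V1 (D1 i)))
      + \<alpha>\<^sup>2 *\<^sub>R (- blk (pairP P) (\<lambda>i. kron (D1 i) (D1 i)))"
proof -
  have "H22 P phi \<gamma> W \<alpha> = blk (pairP P) (\<lambda>i. kron V1 V1 + \<alpha> *\<^sub>R (kron (D1 i) V1 + kron V1 (D1 i)) + \<alpha>\<^sup>2 *\<^sub>R kron (D1 i) (D1 i))"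
    by (simp add: H22_def blk_def Hmat_def kron_def V1_def D1_def algebra_simps power2_eq_square)
  also have "\<dots> = blk (pairP P) (\<lambda>_. kron V1 V1) + \<alpha> *\<^sub>R blk (pairP P) (\<lambda>i. kron (D1 i) V1 + kron V1 (D1 i)) + \<alpha>\<^sup>2 *\<^sub>R blk (pairP P) (\<lambda>i. kron (D1 i) (D1 i))"
    by (rule blk_lin3)
  finally show ?thesis by (simp add: algebra_simps)
qed


lemma Dbar11:
  "(\<Sum>i\<in>UNIV. pinf $ i *\<^sub>R kron (mat 1 :: real^'m::finite^'m) (Amat phi \<gamma> i)) = kron (mat 1) (Abar phi \<gamma> pinf)"
  by (simp add: vec_eq_iff kron_def Abar_def sum_component sum_distrib_left mult.left_commute)

lemma Dbar22:
  "(\<Sum>i\<in>UNIV. pinf $ i *\<^sub>R (kron (D i) V + kron V (D i)))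
     = kron (\<Sum>i\<in>UNIV. pinf $ i *\<^sub>R D i) V + kron V (\<Sum>i\<in>UNIV. pinf $ i *\<^sub>R D i)"
  by (simp add: vec_eq_iff kron_def sum_component sum.distrib sum_distrib_left sum_distrib_right
      algebra_simps)

lemma V1_sym:
  fixes W :: "real^'m::finite^'m"
  assumes Wd: "doubly_stochastic W" and con: "connected_undirected_pattern W"
  shows "\<And>x y. kron W (mat 1 :: real^'p::finite^'p) $ x $ y > 0 \<Longrightarrow> kron W (mat 1 :: real^'p^'p) $ y $ x > 0"
proof -
  fix x y :: "'m \<times> 'p" assume h: "kron W (mat 1 :: real^'p^'p) $ x $ y > 0"
  hence s: "snd x = snd y" and w: "W $ fst x $ fst y > 0"
    by (auto simp: kron_def mat_def split: if_splits)
  have "W $ fst y $ fst x > 0"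
  proof (cases "fst x = fst y")
    case True thus ?thesis using w by simp
  next
    case False
    hence "(fst x, fst y) \<in> pattern_edges W" using w by (simp add: pattern_edges_def)
    hence "(fst y, fst x) \<in> pattern_edges W"
      using con unfolding connected_undirected_pattern_def by (meson symD)
    hence "W $ fst y $ fst x \<noteq> 0" by (simp add: pattern_edges_def)
    thus ?thesis using ds_nonneg[OF Wd, of "fst y" "fst x"] by simp
  qed
  thus "kron W (mat 1 :: real^'p^'p) $ y $ x > 0" using s by (simp add: kron_def mat_def)
qed

lemma H21_expand:
  "H21 P phi \<gamma> W R \<theta> \<alpha> =
     \<alpha> *\<^sub>R (\<chi> r c. pairP P $ fst c $ fst r *
        (kron W (mat 1) $ fst (snd r) $ snd c * gvec1 R phi \<gamma> \<theta> (fst c) $ snd (snd r)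
         + gvec1 R phi \<gamma> \<theta> (fst c) $ fst (snd r) * kron W (mat 1) $ snd (snd r) $ snd c))
   + \<alpha>\<^sup>2 *\<^sub>R (\<chi> r c. pairP P $ fst c $ fst r *
        (kron (mat 1) (Amat phi \<gamma> (fst c)) $ fst (snd r) $ snd c * gvec1 R phi \<gamma> \<theta> (fst c) $ snd (snd r)
         + gvec1 R phi \<gamma> \<theta> (fst c) $ fst (snd r) * kron (mat 1) (Amat phi \<gamma> (fst c)) $ snd (snd r) $ snd c))"
  by (simp add: vec_eq_iff H21_def Hmat_def Gvec_eq algebra_simps power2_eq_square)

lemma uQ_expand:
  "uQ P pinf phi \<gamma> R \<theta> \<alpha> = \<alpha>\<^sup>2 *\<^sub>R (\<chi> r. \<Sum>i\<in>UNIV. pairP P $ i $ fst r * pinf $ i *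
      (gvec1 R phi \<gamma> \<theta> i $ fst (snd r) * gvec1 R phi \<gamma> \<theta> i $ snd (snd r)))"
  by (simp add: vec_eq_iff uQ_def Gvec_eq sum_distrib_left power2_eq_square algebra_simps)

lemma Cdelta_bound:
  "\<bar>Cdelta (Q :: real^(('z::finite)\<times>((('m::finite)\<times>('p::finite))\<times>('m\<times>'p))))\<bar>
     \<le> (1 / real CARD('m)) * (real CARD('z) * real CARD('m\<times>'p)) * norm Q"
proof -
  have "\<bar>\<Sum>j\<in>UNIV. \<Sum>x\<in>UNIV. Q $ (j, (x, x))\<bar> \<le> (\<Sum>j\<in>UNIV. \<Sum>x\<in>UNIV. \<bar>Q $ (j, (x, x))\<bar>)"
    by (rule order_trans[OF sum_abs]) (intro sum_mono sum_abs)
  also have "\<dots> \<le> (\<Sum>j\<in>(UNIV::'z set). \<Sum>x\<in>(UNIV::('m\<times>'p) set). norm Q)"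
    by (intro sum_mono component_le_norm_cart)
  also have "\<dots> = real CARD('z) * real CARD('m\<times>'p) * norm Q" by simp
  finally have "\<bar>\<Sum>j\<in>UNIV. \<Sum>x\<in>UNIV. Q $ (j, (x, x))\<bar> \<le> real CARD('z) * real CARD('m\<times>'p) * norm Q" .
  hence b: "\<bar>\<Sum>j\<in>UNIV. \<Sum>x\<in>UNIV. Q $ (j, (x, x))\<bar> \<le> real CARD('z) * real CARD('m\<times>'p) * norm Q" .
  have "\<bar>Cdelta Q\<bar> = (1 / real CARD('m)) * \<bar>\<Sum>j\<in>UNIV. \<Sum>x\<in>UNIV. Q $ (j, (x, x))\<bar>"
    unfolding Cdelta_def by (simp add: abs_mult)
  also have "\<dots> \<le> (1 / real CARD('m)) * (real CARD('z) * real CARD('m\<times>'p) * norm Q)"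
    by (rule mult_left_mono[OF b]) simp
  finally show ?thesis by (simp add: mult.assoc)
qed

theorem mainTheorem4:
  fixes P :: "real^('s::finite)^'s" and pinf :: "real^('s\<times>'s)" and phi :: "'s \<Rightarrow> real^('p::finite)"
    and \<gamma> :: real and R :: "('m::finite) \<Rightarrow> 's \<Rightarrow> 's \<Rightarrow> real" and W :: "real^'m^'m"
    and \<theta>s :: "real^'p"
  assumes "stochastic_matrix P" and "irreducible_chain P" and "aperiodic_chain P"
    and "limiting_distribution (pairP P) pinf"
    and "lin_indep_features phi"
    and "0 < \<gamma>" and "\<gamma> < 1"
    and "doubly_stochastic W" and "\<forall>i j. 0 \<le> W $ i $ j \<and> W $ i $ j \<le> 1"
    and "connected_undirected_pattern W"
    and "Abar phi \<gamma> pinf *v \<theta>s + bbar R phi pinf = 0"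
  shows "\<exists>\<alpha>0>0.
     (\<forall>\<alpha>. 0 < \<alpha> \<and> \<alpha> < \<alpha>0 \<longrightarrow>
        invertible (mat 1 - H11 P phi \<gamma> W \<alpha>) \<and> invertible (mat 1 - H22 P phi \<gamma> W \<alpha>))
   \<and> (\<lambda>\<alpha>. norm (qinf P pinf phi \<gamma> W R \<theta>s \<alpha>)) \<in> O[at_right 0](\<lambda>\<alpha>. \<alpha>)
   \<and> (\<lambda>\<alpha>. norm (Qinf P pinf phi \<gamma> W R \<theta>s \<alpha>)) \<in> O[at_right 0](\<lambda>\<alpha>. \<alpha>)
   \<and> (\<lambda>\<alpha>. deltainf P pinf phi \<gamma> W R \<theta>s \<alpha>) \<in> O[at_right 0](\<lambda>\<alpha>. \<alpha>)"
proof -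
  note Ps = assms(1) and irr = assms(2) and lim = assms(4) and li = assms(5)
    and g0 = assms(6) and g1 = assms(7) and Wd = assms(8) and con = assms(10) and eq = assms(11)
  define Qm where "Qm = pairP P"
  have Qs: "stochastic_matrix Qm" unfolding Qm_def by (rule pairP_stochastic[OF Ps])
  have limQ: "limiting_distribution Qm pinf" unfolding Qm_def by (rule lim)
  define V1 where "V1 = kron W (mat 1 :: real^'p^'p)"
  define D1 where "D1 i = kron (mat 1 :: real^'m^'m) (Amat phi \<gamma> i)" for i
  define N where "N = kron (mat 1 :: real^'m^'m) (Abar phi \<gamma> pinf)"
  have negA: "negdef (Abar phi \<gamma> pinf)" by (rule Abar_negdef[OF Ps irr lim li g0 g1])
  have N1: "negdef N" unfolding N_def by (rule negdef_kron_I_left[OF negA])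
  have NS: "(\<Sum>i\<in>UNIV. pinf $ i *\<^sub>R D1 i) = N" unfolding D1_def N_def by (rule Dbar11)
  have V1d: "doubly_stochastic V1" unfolding V1_def by (rule kron_ds[OF Wd ds_mat1])
  have V1s: "\<And>x y. V1 $ x $ y > 0 \<Longrightarrow> V1 $ y $ x > 0" unfolding V1_def by (rule V1_sym[OF Wd con])

  define L1 :: "(real^(('s\<times>'s)\<times>('m\<times>'p))) set" where "L1 = {lift t | t. transpose V1 *v t = t}"
  have test1: "\<And>s. V1 *v s = s \<Longrightarrow> s \<noteq> 0 \<Longrightarrow> \<exists>t. transpose V1 *v t = t \<and> t \<bullet> ((\<Sum>i\<in>UNIV. pinf $ i *\<^sub>R D1 i) *v s) \<noteq> 0"
    unfolding NS by (rule test11[OF V1d N1])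
  note bc1 = block_conds[OF Qs limQ V1d test1]
  have L0a: "\<And>l y. l \<in> L1 \<Longrightarrow> l \<bullet> ((mat 1 - blk Qm (\<lambda>_. V1)) *v y) = 0"
    unfolding L1_def by (rule bc1(1))
  have Ka: "\<And>y. (mat 1 - blk Qm (\<lambda>_. V1)) *v y = 0 \<Longrightarrow> (\<forall>l\<in>L1. l \<bullet> ((- blk Qm D1) *v y) = 0) \<Longrightarrow> y = 0"
    unfolding L1_def by (rule bc1(2))
  have Mfa: "\<And>\<alpha> x. (mat 1 - H11 P phi \<gamma> W \<alpha>) *v x = (mat 1 - blk Qm (\<lambda>_. V1)) *v x
      + \<alpha> *\<^sub>R ((- blk Qm D1) *v x) + \<alpha>\<^sup>2 *\<^sub>R (0 *v x)"
    unfolding Qm_def V1_def D1_def by (simp only: H11_expand mv_lin3)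
  from core_lower[OF Mfa L0a Ka] obtain c1 a1 where c1: "c1 > 0" "a1 > 0"
    and lb1': "\<forall>\<alpha> x. 0 < \<alpha> \<and> \<alpha> < a1 \<longrightarrow> c1 * \<alpha> * norm x \<le> norm ((mat 1 - H11 P phi \<gamma> W \<alpha>) *v x)"
    by blast
  have lb1: "\<And>\<alpha> x. 0 < \<alpha> \<Longrightarrow> \<alpha> < a1 \<Longrightarrow> c1 * \<alpha> * norm x \<le> norm ((mat 1 - H11 P phi \<gamma> W \<alpha>) *v x)"
    using lb1' by blast
  have u1c: "l \<bullet> u1 P pinf phi \<gamma> R \<theta>s = 0" if lL: "l \<in> L1" for l
  proof -
    obtain t where l: "l = lift t" and t: "transpose V1 *v t = t" using lL unfolding L1_def by blast
    show ?thesis unfolding l by (rule u1_cond[OF Ps Wd con eq t[unfolded V1_def]])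
  qed
  from core_bounded[OF Mfa L0a Ka u1c] obtain C a3 where a3: "a3 > 0"
    and ub1': "\<forall>\<alpha> z. 0 < \<alpha> \<and> \<alpha> < a3 \<and> (mat 1 - H11 P phi \<gamma> W \<alpha>) *v z = u1 P pinf phi \<gamma> R \<theta>s \<longrightarrow> norm z \<le> C"
    by blast
  have ub1: "\<And>\<alpha> z. 0 < \<alpha> \<Longrightarrow> \<alpha> < a3 \<Longrightarrow> (mat 1 - H11 P phi \<gamma> W \<alpha>) *v z = u1 P pinf phi \<gamma> R \<theta>s \<Longrightarrow> norm z \<le> C"
    using ub1' by blast

  define V2 where "V2 = kron V1 V1"
  define D2 where "D2 i = kron (D1 i) V1 + kron V1 (D1 i)" for i
  define E2 where "E2 i = kron (D1 i) (D1 i)" for i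
  define L2 :: "(real^(('s\<times>'s)\<times>(('m\<times>'p)\<times>('m\<times>'p)))) set" where "L2 = {lift t | t. transpose V2 *v t = t}"
  have V2d: "doubly_stochastic V2" unfolding V2_def by (rule kron_ds[OF V1d V1d])
  have NS2: "(\<Sum>i\<in>UNIV. pinf $ i *\<^sub>R D2 i) = kron N V1 + kron V1 N"
    unfolding D2_def by (simp only: Dbar22 NS)
  have test2: "\<And>s. V2 *v s = s \<Longrightarrow> s \<noteq> 0 \<Longrightarrow> \<exists>t. transpose V2 *v t = t \<and> t \<bullet> ((\<Sum>i\<in>UNIV. pinf $ i *\<^sub>R D2 i) *v s) \<noteq> 0"
    unfolding NS2 V2_def by (rule test22[OF V1d V1s N1])
  note bc2 = block_conds[OF Qs limQ V2d test2]
  have L0b: "\<And>l y. l \<in> L2 \<Longrightarrow> l \<bullet> ((mat 1 - blk Qm (\<lambda>_. V2)) *v y) = 0"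
    unfolding L2_def by (rule bc2(1))
  have Kb: "\<And>y. (mat 1 - blk Qm (\<lambda>_. V2)) *v y = 0 \<Longrightarrow> (\<forall>l\<in>L2. l \<bullet> ((- blk Qm D2) *v y) = 0) \<Longrightarrow> y = 0"
    unfolding L2_def by (rule bc2(2))
  have Mfb: "\<And>\<alpha> x. (mat 1 - H22 P phi \<gamma> W \<alpha>) *v x = (mat 1 - blk Qm (\<lambda>_. V2)) *v x
      + \<alpha> *\<^sub>R ((- blk Qm D2) *v x) + \<alpha>\<^sup>2 *\<^sub>R ((- blk Qm E2) *v x)"
    unfolding Qm_def V2_def D2_def E2_def V1_def D1_def by (simp only: H22_expand mv_lin3)
  from core_lower[OF Mfb L0b Kb] obtain c2 a2 where c2: "c2 > 0" "a2 > 0"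
    and lb2': "\<forall>\<alpha> x. 0 < \<alpha> \<and> \<alpha> < a2 \<longrightarrow> c2 * \<alpha> * norm x \<le> norm ((mat 1 - H22 P phi \<gamma> W \<alpha>) *v x)"
    by blast
  have lb2: "\<And>\<alpha> x. 0 < \<alpha> \<Longrightarrow> \<alpha> < a2 \<Longrightarrow> c2 * \<alpha> * norm x \<le> norm ((mat 1 - H22 P phi \<gamma> W \<alpha>) *v x)"
    using lb2' by blast

  have "\<exists>K1 K2. \<forall>\<alpha>. H21 P phi \<gamma> W R \<theta>s \<alpha> = \<alpha> *\<^sub>R K1 + \<alpha>\<^sup>2 *\<^sub>R K2"
    by (rule exI, rule exI, rule allI, rule H21_expand)
  then obtain K1 K2 where H21e: "\<And>\<alpha>. H21 P phi \<gamma> W R \<theta>s \<alpha> = \<alpha> *\<^sub>R K1 + \<alpha>\<^sup>2 *\<^sub>R K2" by blast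
  have "\<exists>U. \<forall>\<alpha>. uQ P pinf phi \<gamma> R \<theta>s \<alpha> = \<alpha>\<^sup>2 *\<^sub>R U"
    by (rule exI, rule allI, rule uQ_expand)
  then obtain U where uQe: "\<And>\<alpha>. uQ P pinf phi \<gamma> R \<theta>s \<alpha> = \<alpha>\<^sup>2 *\<^sub>R U" by blast
  obtain B1 where B1: "B1 > 0" "\<And>x. norm (K1 *v x) \<le> norm x * B1"
    using bounded_linear.pos_bounded[OF matrix_vector_mul_bounded_linear[of K1]] by blast
  obtain B2 where B2: "B2 > 0" "\<And>x. norm (K2 *v x) \<le> norm x * B2"
    using bounded_linear.pos_bounded[OF matrix_vector_mul_bounded_linear[of K2]] by blast

  define \<alpha>0 where "\<alpha>0 = min (min a1 a2) (min a3 1)"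
  have a0: "\<alpha>0 > 0" using c1 c2 a3 by (simp add: \<alpha>0_def)
  define C' where "C' = max C 0"
  have C'0: "C' \<ge> 0" by (simp add: C'_def)
  have inv1: "invertible (mat 1 - H11 P phi \<gamma> W \<alpha>)" if "0 < \<alpha>" "\<alpha> < \<alpha>0" for \<alpha>
    using that by (intro lower_invertible[OF c1(1), of \<alpha>]) (auto simp: \<alpha>0_def intro!: lb1)
  have inv2: "invertible (mat 1 - H22 P phi \<gamma> W \<alpha>)" if "0 < \<alpha>" "\<alpha> < \<alpha>0" for \<alpha>
    using that by (intro lower_invertible[OF c2(1), of \<alpha>]) (auto simp: \<alpha>0_def intro!: lb2)
  have qb: "norm (qinf P pinf phi \<gamma> W R \<theta>s \<alpha>) \<le> C' * \<alpha>" if a: "0 < \<alpha>" "\<alpha> < \<alpha>0" for \<alpha>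
  proof -
    let ?M = "mat 1 - H11 P phi \<gamma> W \<alpha>"
    define z where "z = matrix_inv ?M *v u1 P pinf phi \<gamma> R \<theta>s"
    have Mz: "?M *v z = u1 P pinf phi \<gamma> R \<theta>s" unfolding z_def by (rule inv_apply[OF inv1[OF a]])
    have nz: "norm z \<le> C" using a by (intro ub1[OF _ _ Mz]) (auto simp: \<alpha>0_def)
    have "qinf P pinf phi \<gamma> W R \<theta>s \<alpha> = \<alpha> *\<^sub>R z"
      by (simp add: qinf_def z_def uq_eq matrix_vector_mult_scaleR)
    hence "norm (qinf P pinf phi \<gamma> W R \<theta>s \<alpha>) = \<alpha> * norm z" using a by simp
    also have "\<dots> \<le> \<alpha> * C'" using a nz by (intro mult_left_mono) (auto simp: C'_def)
    finally show ?thesis by (simp add: mult.commute)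
  qed
  define KQ where "KQ = (B1 * C' + B2 * C' + norm U) / c2"
  have Qb: "norm (Qinf P pinf phi \<gamma> W R \<theta>s \<alpha>) \<le> KQ * \<alpha>" if a: "0 < \<alpha>" "\<alpha> < \<alpha>0" for \<alpha>
  proof -
    let ?M = "mat 1 - H22 P phi \<gamma> W \<alpha>"
    let ?q = "qinf P pinf phi \<gamma> W R \<theta>s \<alpha>"
    define d where "d = H21 P phi \<gamma> W R \<theta>s \<alpha> *v ?q + uQ P pinf phi \<gamma> R \<theta>s \<alpha>"
    define w where "w = Qinf P pinf phi \<gamma> W R \<theta>s \<alpha>"
    have wd: "w = matrix_inv ?M *v d" by (simp add: w_def d_def Qinf_def)
    have Mw: "?M *v w = d" unfolding wd by (rule inv_apply[OF inv2[OF a]])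
    have a1': "\<alpha> < a2" "\<alpha> \<le> 1" using a by (auto simp: \<alpha>0_def)
    have low: "c2 * \<alpha> * norm w \<le> norm d" using lb2[OF a(1) a1'(1), of w] Mw by simp
    have nq: "norm ?q \<le> C' * \<alpha>" by (rule qb[OF a])
    have dexp: "d = \<alpha> *\<^sub>R (K1 *v ?q) + \<alpha>\<^sup>2 *\<^sub>R (K2 *v ?q) + \<alpha>\<^sup>2 *\<^sub>R U"
      unfolding d_def H21e uQe
      by (simp only: matrix_vector_mult_add_rdistrib scaleR_matrix_vector_assoc)
    have "norm d \<le> norm (\<alpha> *\<^sub>R (K1 *v ?q)) + norm (\<alpha>\<^sup>2 *\<^sub>R (K2 *v ?q)) + norm (\<alpha>\<^sup>2 *\<^sub>R U)"
      unfolding dexp by (rule order_trans[OF norm_triangle_ineq add_right_mono[OF norm_triangle_ineq]])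
    also have "\<dots> = \<alpha> * norm (K1 *v ?q) + \<alpha>\<^sup>2 * norm (K2 *v ?q) + \<alpha>\<^sup>2 * norm U"
      using a by simp
    also have "\<dots> \<le> \<alpha> * (C' * \<alpha> * B1) + \<alpha>\<^sup>2 * (C' * \<alpha> * B2) + \<alpha>\<^sup>2 * norm U"
    proof -
      have "norm (K1 *v ?q) \<le> norm ?q * B1" by (rule B1(2))
      also have "\<dots> \<le> C' * \<alpha> * B1" by (rule mult_right_mono[OF nq]) (use B1 in simp)
      finally have "norm (K1 *v ?q) \<le> C' * \<alpha> * B1" .
      moreover have "norm (K2 *v ?q) \<le> norm ?q * B2" by (rule B2(2))
      moreover have "norm ?q * B2 \<le> C' * \<alpha> * B2" by (rule mult_right_mono[OF nq]) (use B2 in simp)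
      ultimately show ?thesis using a by (intro add_mono mult_left_mono) auto
    qed
    also have "\<dots> \<le> \<alpha>\<^sup>2 * (B1 * C' + B2 * C' + norm U)"
    proof -
      have "\<alpha>\<^sup>2 * (C' * \<alpha> * B2) \<le> \<alpha>\<^sup>2 * (C' * B2)"
        proof (rule mult_left_mono)
        have "C' * \<alpha> \<le> C' * 1" by (rule mult_left_mono[OF a1'(2) C'0])
        thus "C' * \<alpha> * B2 \<le> C' * B2" using B2(1) by (simp add: mult_right_mono)
      qed simp
      thus ?thesis by (simp add: power2_eq_square algebra_simps)
    qed
    finally have nd: "norm d \<le> \<alpha>\<^sup>2 * (B1 * C' + B2 * C' + norm U)" .
    have "c2 * \<alpha> * norm w \<le> \<alpha>\<^sup>2 * (B1 * C' + B2 * C' + norm U)" using low nd by linarith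
    moreover have "c2 * \<alpha> * (KQ * \<alpha>) = \<alpha>\<^sup>2 * (B1 * C' + B2 * C' + norm U)"
      using c2 by (simp add: KQ_def power2_eq_square)
    ultimately have "c2 * \<alpha> * norm w \<le> c2 * \<alpha> * (KQ * \<alpha>)" by linarith
    hence "norm w \<le> KQ * \<alpha>" using c2 a by (simp add: mult_le_cancel_left_pos)
    thus ?thesis by (simp add: w_def)
  qed
  define K3 where "K3 = (1 / real CARD('m)) * (real CARD('s\<times>'s) * real CARD('m\<times>'p))"
  have K30: "K3 \<ge> 0" by (simp add: K3_def)
  have db: "\<bar>deltainf P pinf phi \<gamma> W R \<theta>s \<alpha>\<bar> \<le> (K3 * KQ) * \<alpha>" if a: "0 < \<alpha>" "\<alpha> < \<alpha>0" for \<alpha>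
  proof -
    have "\<bar>deltainf P pinf phi \<gamma> W R \<theta>s \<alpha>\<bar> \<le> K3 * norm (Qinf P pinf phi \<gamma> W R \<theta>s \<alpha>)"
      unfolding deltainf_def K3_def by (rule Cdelta_bound)
    also have "\<dots> \<le> K3 * (KQ * \<alpha>)" by (rule mult_left_mono[OF Qb[OF a] K30])
    finally show ?thesis by (simp add: mult.assoc)
  qed
  have ev: "\<And>Pr. (\<And>\<alpha>. 0 < \<alpha> \<Longrightarrow> \<alpha> < \<alpha>0 \<Longrightarrow> Pr \<alpha>) \<Longrightarrow> eventually Pr (at_right 0)"
    by (rule eventually_at_rightI[OF _ a0]) auto
  show ?thesis
  proof (intro exI[of _ \<alpha>0] conjI allI impI)
    show "0 < \<alpha>0" by (rule a0)
    fix \<alpha> :: real assume "0 < \<alpha> \<and> \<alpha> < \<alpha>0"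
    thus "invertible (mat 1 - H11 P phi \<gamma> W \<alpha>)" "invertible (mat 1 - H22 P phi \<gamma> W \<alpha>)"
      using inv1 inv2 by auto
  next
    show "(\<lambda>\<alpha>. norm (qinf P pinf phi \<gamma> W R \<theta>s \<alpha>)) \<in> O[at_right 0](\<lambda>\<alpha>. \<alpha>)"
      by (rule bigoI[where c = C'], rule ev) (simp add: qb)
    show "(\<lambda>\<alpha>. norm (Qinf P pinf phi \<gamma> W R \<theta>s \<alpha>)) \<in> O[at_right 0](\<lambda>\<alpha>. \<alpha>)"
      by (rule bigoI[where c = KQ], rule ev) (simp add: Qb)
    show "(\<lambda>\<alpha>. deltainf P pinf phi \<gamma> W R \<theta>s \<alpha>) \<in> O[at_right 0](\<lambda>\<alpha>. \<alpha>)"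
      by (rule bigoI[where c = "K3 * KQ"], rule ev) (simp add: db)
  qed
qed

end
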